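(* Let $k\ge1$ and either $\beta\in(0,k\wedge2)$ or $k=1=\beta$, and let $\hat v$ be as in the context. Let $F\subset(0,\infty)\times\mathbb{R}^k$ be a compact interval and $0<\varepsilon_0<1$. Let $(t,x)\in F$ and $0<\rho\le\varepsilon_0$ with $B_{3\rho}(t,x)\subset F$, and set $(t',x')=(t,x)$. Fix $\delta\in\big(\frac{2-\beta}{2},(2-\beta)\wedge1\big)$. Then there exists a finite constant $C$ such that for all $j\in\{1,\dots,d\}$, $$|\mathrm E[(\hat v_j(s_1,y_1)-\hat v_j(s_2,y_2))\hat v_j(t',x')]|\le C\big(|s_1-s_2|^{\frac{2-\beta}{2}}+|y_1-y_2|^{\delta}\big)$$ holds for all $(s_1,y_1),(s_2,y_2)\in B_{2\rho}(t,x)$, and also for all $(s_1,y_1),(s_2,y_2)\in B_{2\rho}(\tilde t,\tilde x)$ whenever $B_{2\rho}(\tilde t,\tilde x)\subset F$ and $\Delta((t,x),(\tilde t,\tilde x))\ge6\rho$.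
   Context: Let $d\ge1$ and let $W=W_1+iW_2$ with $W_1,W_2$ independent $\mathbb{R}^d$-valued space-time Gaussian white noises on $\mathbb{R}^{1+k}$. Define $v(t,x)=\int_{\mathbb{R}}\int_{\mathbb{R}^k}e^{-i\xi\cdot x}\frac{e^{-i\tau t}-e^{-t|\xi|^2}}{|\xi|^2-i\tau}|\xi|^{-(k-\beta)/2}W(d\tau,d\xi)$ and $\hat v(t,x)=\mathrm{Re}\,v(t,x)$, $(t,x)\in\mathbb{R}_+\times\mathbb{R}^k$ (this has the law of the mild solution of the system of stochastic heat equations $\partial_t\hat v_j=\Delta\hat v_j+\dot{\hat W}_j$, $\hat v(0,\cdot)=0$, driven by noise white in time with spatial covariance $|x-y|^{-\beta}$, or space-time white noise when $k=1=\beta$). Here $\Delta((t,x),(s,y))=|t-s|^{\frac{2-\beta}{4}}+|x-y|^{\frac{2-\beta}{2}}$ and $B_r(t,x)=[t-r^{4/(2-\beta)},t+r^{4/(2-\beta)}]\times\prod_{j=1}^k[x_j-r^{2/(2-\beta)},x_j+r^{2/(2-\beta)}]$. *)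

theory Defs
  imports "HOL-Probability.Probability"
begin

type_synonym 'k pt = "real \<times> (real ^ 'k)"

definition gker :: "real \<Rightarrow> real \<Rightarrow> real ^ 'k \<Rightarrow> complex" where
  "gker t \<tau> \<xi> = (cis (- \<tau> * t) - complex_of_real (exp (- t * (norm \<xi>)\<^sup>2)))
                 / (complex_of_real ((norm \<xi>)\<^sup>2) - \<i> * complex_of_real \<tau>)"

text \<open>Covariance E[hat v_j(s,y) hat v_j(t,x)] obtained from the white-noise representation
 (Ito isometry for W = W1 + i W2 and hat v = Re v):
 Re of the integral of e^{-i xi.(y-x)} g_s conj(g_t) |xi|^{-(k-beta)} over (tau,xi).\<close>
definition vcov :: "real \<Rightarrow> 'k::finite pt \<Rightarrow> 'k pt \<Rightarrow> real" where
  "vcov \<beta> p q = Re (integral\<^sup>L lborel (\<lambda>(\<tau>::real, \<xi>::real ^ 'k).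
       cis (- (\<xi> \<bullet> (snd p - snd q))) * gker (fst p) \<tau> \<xi> * cnj (gker (fst q) \<tau> \<xi>)
       * complex_of_real ((norm \<xi>) powr (- (real CARD('k) - \<beta>)))))"

definition Dist :: "real \<Rightarrow> 'k::finite pt \<Rightarrow> 'k pt \<Rightarrow> real" where
  "Dist \<beta> p q = \<bar>fst p - fst q\<bar> powr ((2 - \<beta>) / 4) + norm (snd p - snd q) powr ((2 - \<beta>) / 2)"

definition Bbox :: "real \<Rightarrow> real \<Rightarrow> 'k::finite pt \<Rightarrow> 'k pt set" where
  "Bbox \<beta> r p = {q. \<bar>fst q - fst p\<bar> \<le> r powr (4 / (2 - \<beta>)) \<and>
                     (\<forall>i. \<bar>snd q $ i - snd p $ i\<bar> \<le> r powr (2 / (2 - \<beta>)))}"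

text \<open>X is (a version of) hat v: an R^d-valued process (components j < d) on a probability
 space, square integrable, with covariance E[X_j(p) X_j(q)] = vcov beta p q.\<close>
definition hat_v_process :: "'a measure \<Rightarrow> nat \<Rightarrow> real \<Rightarrow> (nat \<Rightarrow> 'k::finite pt \<Rightarrow> 'a \<Rightarrow> real) \<Rightarrow> bool" where
  "hat_v_process M d \<beta> X \<longleftrightarrow> prob_space M \<and>
     (\<forall>j<d. \<forall>p. X j p \<in> borel_measurable M \<and> integrable M (\<lambda>\<omega>. (X j p \<omega>)\<^sup>2)) \<and>
     (\<forall>j<d. \<forall>p q. integral\<^sup>L M (\<lambda>\<omega>. X j p \<omega> * X j q \<omega>) = vcov \<beta> p q)"

end

theory Submission
  imports Defs "HOL-Analysis.Analysis"
begin
lemma nn_sym: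
  fixes g :: "real \<Rightarrow> real"
  assumes [measurable]: "g \<in> borel_measurable borel"
  shows "(\<integral>\<^sup>+\<tau>. ennreal (g \<bar>\<tau>\<bar>) \<partial>lborel) \<le> 2 * (\<integral>\<^sup>+\<tau>. ennreal (g \<tau> * indicator {0..} \<tau>) \<partial>lborel)"
proof -
  have "(\<integral>\<^sup>+\<tau>. ennreal (g \<bar>\<tau>\<bar>) \<partial>lborel) = (\<integral>\<^sup>+\<tau>. ennreal (g \<tau> * indicator {0..} \<tau>) + ennreal (g (-\<tau>) * indicator {0<..} (-\<tau>)) \<partial>lborel)"
    by (rule nn_integral_cong) (auto simp: indicator_def)
  also have "\<dots> = (\<integral>\<^sup>+\<tau>. ennreal (g \<tau> * indicator {0..} \<tau>) \<partial>lborel) + (\<integral>\<^sup>+\<tau>. ennreal (g (-\<tau>) * indicator {0<..} (-\<tau>)) \<partial>lborel)"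
    by (rule nn_integral_add) auto
  also have "(\<integral>\<^sup>+\<tau>. ennreal (g (-\<tau>) * indicator {0<..} (-\<tau>)) \<partial>lborel) = (\<integral>\<^sup>+\<tau>. ennreal (g \<tau> * indicator {0<..} \<tau>) \<partial>lborel)"
    using nn_integral_real_affine[of "\<lambda>\<tau>. ennreal (g \<tau> * indicator {0<..} \<tau>)" "-1" 0] by simp
  also have "\<dots> \<le> (\<integral>\<^sup>+\<tau>. ennreal (g \<tau> * indicator {0..} \<tau>) \<partial>lborel)"
    by (rule nn_integral_mono) (auto simp: indicator_def)
  finally show ?thesis by (simp add: mult_2 add_left_mono)
qed

lemma nn_int_const_Icc:
  assumes "0 \<le> A" "0 \<le> c"
  shows "(\<integral>\<^sup>+\<tau>. ennreal (c * indicator {0..A} \<tau>) \<partial>lborel) = ennreal (c * A)"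
proof -
  have "(\<integral>\<^sup>+\<tau>. ennreal (c * indicator {0..A} \<tau>) \<partial>lborel) = (\<integral>\<^sup>+\<tau>. ennreal c * indicator {0..A} \<tau> \<partial>lborel)"
    by (rule nn_integral_cong) (auto simp: indicator_def)
  also have "\<dots> = ennreal (c * A)" using assms by (simp add: nn_integral_cmult_indicator ennreal_mult)
  finally show ?thesis .
qed

lemma nn_int_tail:
  assumes "0 < A"
  shows "(\<integral>\<^sup>+\<tau>. ennreal (\<tau> powr (-2) * indicator {A..} \<tau>) \<partial>lborel) = ennreal (1 / A)"
proof -
  have "((\<lambda>x. x powr (-2)) has_integral -(A powr (-2+1)) / (-2+1)) {A..}"
    by (rule has_integral_powr_to_inf) (use assms in auto)
  then have "((\<lambda>x. if x \<in> {A..} then x powr (-2) else 0) has_integral 1 / A) UNIV"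
    by (subst has_integral_restrict_UNIV) (use assms in \<open>simp add: powr_minus_divide\<close>)
  moreover have "(\<lambda>x. x powr (-2) * indicator {A..} x) = (\<lambda>x. if x \<in> {A..} then x powr (-2) else 0)"
    by (auto simp: indicator_def fun_eq_iff)
  ultimately have "((\<lambda>x. x powr (-2) * indicator {A..} x) has_integral 1 / A) UNIV"
    by simp
  then show ?thesis
    by (subst nn_integral_has_integral_lborel) (auto simp: indicator_def)
qed

lemma nn_int_powr0:
  assumes "0 < L" "-1 < a"
  shows "(\<integral>\<^sup>+\<tau>. ennreal (\<tau> powr a * indicator {0..L} \<tau>) \<partial>lborel) = ennreal (L powr (a+1) / (a+1))"
proof -
  have "((\<lambda>x. x powr a) has_integral (L powr (a+1) / (a+1))) {0..L}"
    by (rule has_integral_powr_from_0) (use assms in auto)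
  then have "((\<lambda>x. if x \<in> {0..L} then x powr a else 0) has_integral (L powr (a+1) / (a+1))) UNIV"
    by (subst has_integral_restrict_UNIV)
  moreover have "(\<lambda>x. x powr a * indicator {0..L} x) = (\<lambda>x. if x \<in> {0..L} then x powr a else 0)"
    by (auto simp: indicator_def fun_eq_iff)
  ultimately have "((\<lambda>x. x powr a * indicator {0..L} x) has_integral (L powr (a+1) / (a+1))) UNIV"
    by simp
  then show ?thesis
    by (subst nn_integral_has_integral_lborel) (auto simp: indicator_def)
qed

definition bump :: "real \<Rightarrow> real \<Rightarrow> real" where
  "bump A \<tau> = (if \<bar>\<tau>\<bar> \<le> A then 1 / A^2 else 1 / \<tau>^2)"

lemma nn_int_bump:
  assumes A: "0 < A"
  shows "(\<integral>\<^sup>+\<tau>. ennreal (bump A \<tau>) \<partial>lborel) \<le> ennreal (4 / A)"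
proof -
  define g where "g \<tau> = (if \<tau> \<le> A then 1 / A^2 else 1 / \<tau>^2)" for \<tau> :: real
  have gm: "g \<in> borel_measurable borel" unfolding g_def by measurable
  have "(\<integral>\<^sup>+\<tau>. ennreal (bump A \<tau>) \<partial>lborel) = (\<integral>\<^sup>+\<tau>. ennreal (g \<bar>\<tau>\<bar>) \<partial>lborel)"
    by (rule nn_integral_cong) (simp add: bump_def g_def)
  also have "\<dots> \<le> 2 * (\<integral>\<^sup>+\<tau>. ennreal (g \<tau> * indicator {0..} \<tau>) \<partial>lborel)"
    by (rule nn_sym[OF gm])
  also have "(\<integral>\<^sup>+\<tau>. ennreal (g \<tau> * indicator {0..} \<tau>) \<partial>lborel)
     \<le> (\<integral>\<^sup>+\<tau>. ennreal ((1/A^2) * indicator {0..A} \<tau>) + ennreal (\<tau> powr (-2) * indicator {A..} \<tau>) \<partial>lborel)"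
  proof (rule nn_integral_mono)
    fix \<tau> :: real
    show "ennreal (g \<tau> * indicator {0..} \<tau>) \<le> ennreal ((1/A^2) * indicator {0..A} \<tau>) + ennreal (\<tau> powr (-2) * indicator {A..} \<tau>)"
    proof (cases "\<tau> \<le> A")
      case True then show ?thesis by (auto simp: g_def indicator_def)
    next
      case False
      then have "\<tau> > 0" using A by simp
      then have "\<tau> powr (-2) = 1 / \<tau>^2" by (simp add: powr_minus_divide powr_realpow)
      then show ?thesis using False A by (auto simp: g_def indicator_def)
    qed
  qed
  also have "\<dots> = (\<integral>\<^sup>+\<tau>. ennreal ((1/A^2) * indicator {0..A} \<tau>) \<partial>lborel) + (\<integral>\<^sup>+\<tau>. ennreal (\<tau> powr (-2) * indicator {A..} \<tau>) \<partial>lborel)"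
    by (rule nn_integral_add) auto
  also have "\<dots> = ennreal (1/A^2 * A) + ennreal (1 / A)"
    using A nn_int_const_Icc[of A "1/A^2"] nn_int_tail[of A] by simp
  also have "\<dots> = ennreal (2 / A)" using A by (simp add: power2_eq_square ennreal_plus[symmetric] del: ennreal_plus)
  finally have "(\<integral>\<^sup>+\<tau>. ennreal (bump A \<tau>) \<partial>lborel) \<le> 2 * ennreal (2 / A)" by (simp add: mult_left_mono)
  also have "\<dots> = ennreal (4 / A)" using ennreal_mult[of 2 "2/A"] A by simp
  finally show ?thesis .
qed

lemma nn_int_powr_sym:
  assumes L: "0 < L" and th: "0 < \<theta>"
  shows "(\<integral>\<^sup>+\<tau>. ennreal (if \<bar>\<tau>\<bar> \<le> L then \<bar>\<tau>\<bar> powr (\<theta> - 1) else 0) \<partial>lborel) \<le> ennreal (2 * L powr \<theta> / \<theta>)"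
proof -
  define g where "g \<tau> = (if \<tau> \<le> L then \<tau> powr (\<theta> - 1) else 0)" for \<tau> :: real
  have gm: "g \<in> borel_measurable borel" unfolding g_def by measurable
  have "(\<integral>\<^sup>+\<tau>. ennreal (if \<bar>\<tau>\<bar> \<le> L then \<bar>\<tau>\<bar> powr (\<theta> - 1) else 0) \<partial>lborel) = (\<integral>\<^sup>+\<tau>. ennreal (g \<bar>\<tau>\<bar>) \<partial>lborel)"
    by (simp add: g_def)
  also have "\<dots> \<le> 2 * (\<integral>\<^sup>+\<tau>. ennreal (g \<tau> * indicator {0..} \<tau>) \<partial>lborel)"
    by (rule nn_sym[OF gm])
  also have "(\<integral>\<^sup>+\<tau>. ennreal (g \<tau> * indicator {0..} \<tau>) \<partial>lborel) = (\<integral>\<^sup>+\<tau>. ennreal (\<tau> powr (\<theta> - 1) * indicator {0..L} \<tau>) \<partial>lborel)"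
    by (rule nn_integral_cong) (auto simp: g_def indicator_def)
  also have "\<dots> = ennreal (L powr \<theta> / \<theta>)"
    using nn_int_powr0[of L "\<theta> - 1"] L th by simp
  also have "2 * ennreal (L powr \<theta> / \<theta>) = ennreal (2 * L powr \<theta> / \<theta>)"
    using ennreal_mult[of 2 "L powr \<theta> / \<theta>"] th by simp
  finally show ?thesis by (simp add: mult_left_mono)
qed

lemma ennreal_le_suminf_term: "(f::nat \<Rightarrow> ennreal) i \<le> (\<Sum>j. f j)"
  using sum_le_suminf[OF summableI, of "{i}" f] by simp

lemma nn_cover:
  fixes f :: "'a \<Rightarrow> ennreal"
  assumes S: "\<And>j. S j \<in> sets M" and A: "A \<subseteq> (\<Union>j. S j)" and f: "f \<in> borel_measurable M"
  shows "(\<integral>\<^sup>+ x. f x * indicator A x \<partial>M) \<le> (\<Sum>j. \<integral>\<^sup>+ x. f x * indicator (S j) x \<partial>M)"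
proof -
  have "(\<integral>\<^sup>+ x. f x * indicator A x \<partial>M) \<le> (\<integral>\<^sup>+ x. (\<Sum>j. f x * indicator (S j) x) \<partial>M)"
  proof (rule nn_integral_mono)
    fix x show "f x * indicator A x \<le> (\<Sum>j. f x * indicator (S j) x)"
    proof (cases "x \<in> A")
      case True
      then obtain j where "x \<in> S j" using A by blast
      then have "f x * indicator A x = f x * indicator (S j) x" using True by simp
      also have "\<dots> \<le> (\<Sum>j. f x * indicator (S j) x)" by (rule ennreal_le_suminf_term)
      finally show ?thesis .
    qed simp
  qed
  also have "\<dots> = (\<Sum>j. \<integral>\<^sup>+ x. f x * indicator (S j) x \<partial>M)"
    by (rule nn_integral_suminf) (use S f in auto)
  finally show ?thesis .
qed

lemma shell_bound:
  fixes S :: "'a::euclidean_space set"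
  assumes "S \<subseteq> cball 0 R" "S \<in> sets lborel" "0 \<le> R" "0 \<le> c"
    and "\<And>x. x \<in> S \<Longrightarrow> f x \<le> c"
  shows "(\<integral>\<^sup>+ x. ennreal (f x) * indicator S x \<partial>lborel) \<le> ennreal (c * unit_ball_vol DIM('a) * R ^ DIM('a))"
proof -
  have "(\<integral>\<^sup>+ x. ennreal (f x) * indicator S x \<partial>lborel) \<le> (\<integral>\<^sup>+ x. ennreal c * indicator S x \<partial>lborel)"
    by (rule nn_integral_mono) (auto simp: indicator_def assms(5) ennreal_leI)
  also have "\<dots> = ennreal c * emeasure lborel S" using assms by (simp add: nn_integral_cmult_indicator)
  also have "\<dots> \<le> ennreal c * emeasure lborel (cball (0::'a) R)"
    by (intro mult_left_mono emeasure_mono assms) auto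
  also have "\<dots> = ennreal (c * unit_ball_vol DIM('a) * R ^ DIM('a))"
    using assms by (simp add: emeasure_cball ennreal_mult mult.assoc)
  finally show ?thesis .
qed

lemma radial_small:
  fixes a r :: real
  assumes a: "0 \<le> a" "a < DIM('a::euclidean_space)" and r: "0 < r"
  shows "(\<integral>\<^sup>+ x. ennreal (norm (x::'a) powr (-a) * indicator {x. norm x \<le> r} x) \<partial>lborel)
     \<le> ennreal (unit_ball_vol DIM('a) * 2 powr a / (1 - 2 powr (a - DIM('a))) * r powr (DIM('a) - a))"
proof -
  define n where "n = DIM('a)"
  define V where "V = unit_ball_vol n"
  define S where "S j = {x::'a. r / 2^(Suc j) < norm x \<and> norm x \<le> r / 2^j}" for j
  define q where "q = 2 powr (a - n)"
  have q: "0 < q" "q < 1" using a powr_less_mono[of "a - n" 0 2] by (auto simp: q_def n_def)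
  have V: "0 \<le> V" by (simp add: V_def)
  have Smeas: "S j \<in> sets lborel" for j unfolding S_def by measurable
  have cover: "{x. norm x \<le> r} - {0} \<subseteq> (\<Union>j. S j)"
  proof
    fix x :: 'a assume x: "x \<in> {x. norm x \<le> r} - {0}"
    then have nx: "0 < norm x" "norm x \<le> r" by auto
    obtain m where m: "r / 2^m < norm x"
    proof -
      obtain m where "r / norm x < 2^m" using real_arch_pow[of 2 "r / norm x"] by auto
      then show ?thesis using nx by (intro that[of m]) (auto simp: field_simps)
    qed
    define m0 where "m0 = (LEAST m. r / 2^m < norm x)"
    have m0: "r / 2^m0 < norm x" unfolding m0_def by (rule LeastI[of _ m]) (rule m)
    have "m0 \<noteq> 0"
    proof
      assume "m0 = 0" with m0 nx show False by simp
    qed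
    then obtain j where j: "m0 = Suc j" by (cases m0) auto
    have "\<not> (r / 2^j < norm x)" using j Least_le[of "\<lambda>m. r / 2^m < norm x" j] unfolding m0_def by force
    then have "x \<in> S j" using m0 j by (auto simp: S_def)
    then show "x \<in> (\<Union>j. S j)" by blast
  qed
  have "(\<integral>\<^sup>+ x. ennreal (norm (x::'a) powr (-a) * indicator {x. norm x \<le> r} x) \<partial>lborel)
      = (\<integral>\<^sup>+ x. ennreal (norm (x::'a) powr (-a)) * indicator ({x. norm x \<le> r} - {0}) x \<partial>lborel)"
    by (rule nn_integral_cong) (auto simp: indicator_def)
  also have "\<dots> \<le> (\<Sum>j. \<integral>\<^sup>+ x. ennreal (norm (x::'a) powr (-a)) * indicator (S j) x \<partial>lborel)"
    by (rule nn_cover[OF Smeas cover]) measurable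
  also have "\<dots> \<le> (\<Sum>j. ennreal (V * r powr (n - a) * 2 powr a * q ^ j))"
  proof (rule suminf_le)
    fix j
    have "(\<integral>\<^sup>+ x. ennreal (norm (x::'a) powr (-a)) * indicator (S j) x \<partial>lborel)
       \<le> ennreal ((r / 2^(Suc j)) powr (-a) * unit_ball_vol DIM('a) * (r / 2^j) ^ DIM('a))"
    proof (rule shell_bound)
      show "S j \<subseteq> cball 0 (r / 2 ^ j)" by (auto simp: S_def)
      fix x assume "x \<in> S j"
      then show "norm x powr - a \<le> (r / 2 ^ Suc j) powr - a" using a r
        by (auto simp: S_def intro!: powr_mono2')
    qed (use r Smeas in auto)
    also have "(r / 2^(Suc j)) powr (-a) * unit_ball_vol DIM('a) * (r / 2^j) ^ DIM('a)
        = V * r powr (n - a) * 2 powr a * q ^ j"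
    proof -
      have e1: "(r / 2^(Suc j)) powr (-a) = r powr (-a) * 2 powr a * (2 powr a) ^ j"
        using r by (simp add: powr_divide powr_minus_divide powr_realpow[symmetric] powr_powr
              powr_add[symmetric] field_simps powr_mult)
      have h2: "(2::real) powr (-n) = 1/2^n" by (simp add: powr_minus_divide powr_realpow)
      have h3: "((2::real)^j)^n = (2^n)^j" by (simp add: power_mult[symmetric] mult.commute)
      have e2: "(r / 2^j) ^ n = r powr n * (2 powr (-n)) ^ j"
        using r unfolding h2 by (simp add: power_divide h3 powr_realpow)
      have e3: "q ^ j = (2 powr a) ^ j * (2 powr (-n)) ^ j"
        by (simp add: q_def powr_add[symmetric] power_mult_distrib[symmetric])
      have e4: "r powr (n - a) = r powr n * r powr (-a)" by (simp add: powr_add[symmetric])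
      show ?thesis unfolding e1 e3 e4 n_def[symmetric] V_def[symmetric] e2 by (simp add: ac_simps)
    qed
    finally show "(\<integral>\<^sup>+ x. ennreal (norm (x::'a) powr (-a)) * indicator (S j) x \<partial>lborel) \<le> ennreal (V * r powr (n - a) * 2 powr a * q ^ j)" .
  qed auto
  also have "\<dots> = ennreal (\<Sum>j. V * r powr (n - a) * 2 powr a * q ^ j)"
    using q V by (intro suminf_ennreal2) (auto intro!: summable_mult summable_geometric)
  also have "(\<Sum>j. V * r powr (n - a) * 2 powr a * q ^ j) = V * r powr (n - a) * 2 powr a / (1 - q)"
    using q by (simp add: suminf_mult suminf_geometric divide_simps)
  finally show ?thesis by (simp add: V_def n_def q_def field_simps)
qed

lemma radial_large:
  fixes a r :: real
  assumes a: "DIM('a::euclidean_space) < a" and r: "0 < r"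
  shows "(\<integral>\<^sup>+ x. ennreal (norm (x::'a) powr (-a) * indicator {x. r \<le> norm x} x) \<partial>lborel)
     \<le> ennreal (unit_ball_vol DIM('a) * 2 powr DIM('a) / (1 - 2 powr (DIM('a) - a)) * r powr (DIM('a) - a))"
proof -
  define n where "n = DIM('a)"
  define V where "V = unit_ball_vol n"
  define S where "S j = {x::'a. r * 2^j \<le> norm x \<and> norm x < r * 2^(Suc j)}" for j
  define q where "q = 2 powr (n - a)"
  have q: "0 < q" "q < 1" using a powr_less_mono[of "n - a" 0 2] by (auto simp: q_def n_def)
  have V: "0 \<le> V" by (simp add: V_def)
  have Smeas: "S j \<in> sets lborel" for j unfolding S_def by measurable
  have cover: "{x. r \<le> norm x} \<subseteq> (\<Union>j. S j)"
  proof
    fix x :: 'a assume x: "x \<in> {x. r \<le> norm x}"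
    then have nx: "r \<le> norm x" by auto
    obtain m where m: "norm x < r * 2^m"
    proof -
      obtain m where "norm x / r < 2^m" using real_arch_pow[of 2 "norm x / r"] by auto
      then show ?thesis using r by (intro that[of m]) (auto simp: field_simps)
    qed
    define m0 where "m0 = (LEAST m. norm x < r * 2^m)"
    have m0: "norm x < r * 2^m0" unfolding m0_def by (rule LeastI[of _ m]) (rule m)
    have "m0 \<noteq> 0"
    proof
      assume "m0 = 0" with m0 nx show False by simp
    qed
    then obtain j where j: "m0 = Suc j" by (cases m0) auto
    have "\<not> (norm x < r * 2^j)" using j Least_le[of "\<lambda>m. norm x < r * 2^m" j] unfolding m0_def by force
    then have "x \<in> S j" using m0 j by (auto simp: S_def)
    then show "x \<in> (\<Union>j. S j)" by blast
  qed
  have "(\<integral>\<^sup>+ x. ennreal (norm (x::'a) powr (-a) * indicator {x. r \<le> norm x} x) \<partial>lborel)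
      = (\<integral>\<^sup>+ x. ennreal (norm (x::'a) powr (-a)) * indicator {x. r \<le> norm x} x \<partial>lborel)"
    by (rule nn_integral_cong) (auto simp: indicator_def)
  also have "\<dots> \<le> (\<Sum>j. \<integral>\<^sup>+ x. ennreal (norm (x::'a) powr (-a)) * indicator (S j) x \<partial>lborel)"
    by (rule nn_cover[OF Smeas cover]) measurable
  also have "\<dots> \<le> (\<Sum>j. ennreal (V * r powr (n - a) * 2 powr n * q ^ j))"
  proof (rule suminf_le)
    fix j
    have "(\<integral>\<^sup>+ x. ennreal (norm (x::'a) powr (-a)) * indicator (S j) x \<partial>lborel)
       \<le> ennreal ((r * 2^j) powr (-a) * unit_ball_vol DIM('a) * (r * 2^(Suc j)) ^ DIM('a))"
    proof (rule shell_bound)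
      show "S j \<subseteq> cball 0 (r * 2 ^ Suc j)" by (auto simp: S_def)
      fix x assume "x \<in> S j"
      then show "norm x powr - a \<le> (r * 2^j) powr - a" using a r
        by (auto simp: S_def intro!: powr_mono2')
    qed (use r Smeas in auto)
    also have "(r * 2^j) powr (-a) * unit_ball_vol DIM('a) * (r * 2^(Suc j)) ^ DIM('a)
        = V * r powr (n - a) * 2 powr n * q ^ j"
    proof -
      have e1: "(r * 2^j) powr (-a) = r powr (-a) * (2 powr (-a)) ^ j"
        using r by (simp add: powr_mult powr_realpow[symmetric] powr_powr mult.commute)
      have h3: "((2::real)^j)^n = (2^n)^j" by (simp add: power_mult[symmetric] mult.commute)
      have e2: "(r * 2^(Suc j)) ^ n = r powr n * 2 powr n * (2 powr n) ^ j"
        using r by (simp add: power_mult_distrib h3 powr_realpow)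
      have e3: "q ^ j = (2 powr (-a)) ^ j * (2 powr n) ^ j"
        by (simp add: q_def powr_add[symmetric] power_mult_distrib[symmetric])
      have e4: "r powr (n - a) = r powr n * r powr (-a)" by (simp add: powr_add[symmetric])
      show ?thesis unfolding e1 e3 e4 n_def[symmetric] V_def[symmetric] e2 by (simp add: ac_simps)
    qed
    finally show "(\<integral>\<^sup>+ x. ennreal (norm (x::'a) powr (-a)) * indicator (S j) x \<partial>lborel) \<le> ennreal (V * r powr (n - a) * 2 powr n * q ^ j)" .
  qed auto
  also have "\<dots> = ennreal (\<Sum>j. V * r powr (n - a) * 2 powr n * q ^ j)"
    using q V by (intro suminf_ennreal2) (auto intro!: summable_mult summable_geometric)
  also have "(\<Sum>j. V * r powr (n - a) * 2 powr n * q ^ j) = V * r powr (n - a) * 2 powr n / (1 - q)"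
    using q by (simp add: suminf_mult suminf_geometric divide_simps)
  finally show ?thesis by (simp add: V_def n_def q_def field_simps)
qed

lemma cis_sub1: "cmod (cis x - 1) \<le> \<bar>x\<bar>"
  using iexp_approx1[of x 0] by (simp add: cis_conv_exp)

lemma cis_lip: "cmod (cis a - cis b) \<le> \<bar>a - b\<bar>"
proof -
  have "cis a - cis b = cis b * (cis (a - b) - 1)" by (simp add: algebra_simps cis_mult)
  then have "cmod (cis a - cis b) = cmod (cis (a - b) - 1)" by (simp add: norm_mult)
  then show ?thesis using cis_sub1[of "a - b"] by simp
qed

lemma cis_diff2: "cmod (cis a - cis b) \<le> 2"
  using norm_triangle_ineq4[of "cis a" "cis b"] by simp

lemma exp_lip:
  fixes x y :: real
  assumes "x \<le> 0" "y \<le> 0"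
  shows "\<bar>exp x - exp y\<bar> \<le> \<bar>x - y\<bar>"
proof -
  have *: "exp q - exp p \<le> q - p" if "p \<le> q" "q \<le> 0" for p q :: real
  proof -
    have "exp q - exp p = exp q * (1 - exp (p - q))" by (simp add: algebra_simps exp_diff)
    also have "\<dots> \<le> 1 * (1 - exp (p - q))"
      using that by (intro mult_right_mono) auto
    also have "\<dots> = 1 - exp (p - q)" by simp
    also have "\<dots> \<le> q - p" using exp_ge_add_one_self[of "p - q"] by linarith
    finally show ?thesis .
  qed
  show ?thesis using *[of x y] *[of y x] assms by (cases "x \<le> y") auto
qed


definition RR :: "real \<Rightarrow> real ^ 'k \<Rightarrow> real" where
  "RR \<tau> \<xi> = cmod (complex_of_real ((norm \<xi>)\<^sup>2) - \<i> * complex_of_real \<tau>)"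

lemma RR_ge: "\<bar>\<tau>\<bar> \<le> RR \<tau> \<xi> \<and> (norm \<xi>)\<^sup>2 \<le> RR \<tau> \<xi>"
  unfolding RR_def
  using abs_Im_le_cmod[of "complex_of_real ((norm \<xi>)\<^sup>2) - \<i> * complex_of_real \<tau>"]
        abs_Re_le_cmod[of "complex_of_real ((norm \<xi>)\<^sup>2) - \<i> * complex_of_real \<tau>"]
  by auto

lemma RR_nonneg: "0 \<le> RR \<tau> \<xi>" unfolding RR_def by simp

lemma gker_eq: "gker s \<tau> \<xi> = (cis (- \<tau> * s) - complex_of_real (exp (- s * (norm \<xi>)\<^sup>2))) / (complex_of_real ((norm \<xi>)\<^sup>2) - \<i> * complex_of_real \<tau>)"
  by (simp add: gker_def)

lemma gker_bound:
  assumes s: "0 \<le> s"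
  shows "cmod (gker s \<tau> \<xi>) \<le> 2 * min s (1 / RR \<tau> \<xi>)"
proof -
  define u where "u = (norm \<xi>)\<^sup>2"
  define N where "N = cis (- \<tau> * s) - complex_of_real (exp (- s * u))"
  define D where "D = complex_of_real u - \<i> * complex_of_real \<tau>"
  have R: "RR \<tau> \<xi> = cmod D" by (simp add: RR_def D_def u_def)
  have g: "gker s \<tau> \<xi> = N / D" by (simp add: gker_def N_def D_def u_def)
  have u: "0 \<le> u" by (simp add: u_def)
  have N2: "cmod N \<le> 2"
  proof -
    have "cmod N \<le> cmod (cis (- \<tau> * s)) + cmod (complex_of_real (exp (- s * u)))"
      unfolding N_def by (rule norm_triangle_ineq4)
    also have "\<dots> \<le> 2" using s u by (simp add: mult_nonneg_nonneg)
    finally show ?thesis .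
  qed
  have Ns: "cmod N \<le> 2 * s * cmod D"
  proof -
    have "N = (cis (- \<tau> * s) - 1) + complex_of_real (1 - exp (- s * u))" by (simp add: N_def)
    then have "cmod N \<le> cmod (cis (- \<tau> * s) - 1) + cmod (complex_of_real (1 - exp (- s * u)))"
      by (metis norm_triangle_ineq)
    also have "\<dots> \<le> \<bar>\<tau>\<bar> * s + s * u"
    proof (rule add_mono)
      show "cmod (cis (- \<tau> * s) - 1) \<le> \<bar>\<tau>\<bar> * s" using cis_sub1[of "- \<tau> * s"] s by (simp add: abs_mult)
      have "\<bar>1 - exp (- s * u)\<bar> \<le> s * u"
        using exp_lip[of 0 "- s * u"] s u by (simp add: mult_nonneg_nonneg)
      then show "cmod (complex_of_real (1 - exp (- s * u))) \<le> s * u" by (simp only: norm_of_real)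
    qed
    also have "\<dots> \<le> s * cmod D + s * cmod D"
      using RR_ge[of \<tau> \<xi>] s unfolding R u_def[symmetric]
      by (intro add_mono) (auto simp: mult.commute intro: mult_left_mono)
    finally show ?thesis by simp
  qed
  show ?thesis
  proof (cases "D = 0")
    case True then show ?thesis using s by (simp add: g R)
  next
    case False
    then have Dp: "0 < cmod D" by simp
    have "cmod (gker s \<tau> \<xi>) = cmod N / cmod D" by (simp add: g norm_divide)
    moreover have "cmod N / cmod D \<le> 2 * s" using Ns Dp by (simp add: divide_le_eq)
    moreover have "cmod N / cmod D \<le> 2 * (1 / cmod D)" using N2 Dp by (simp add: divide_right_mono)
    ultimately show ?thesis unfolding R by simp
  qed
qed

lemma gker_diff_bound:
  assumes s: "0 \<le> s1" "0 \<le> s2"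
  shows "cmod (gker s1 \<tau> \<xi> - gker s2 \<tau> \<xi>) \<le> 3 * min (1 / RR \<tau> \<xi>) \<bar>s1 - s2\<bar>"
proof -
  define u where "u = (norm \<xi>)\<^sup>2"
  define h where "h = \<bar>s1 - s2\<bar>"
  define N where "N = (cis (- \<tau> * s1) - cis (- \<tau> * s2)) - complex_of_real (exp (- s1 * u) - exp (- s2 * u))"
  define D where "D = complex_of_real u - \<i> * complex_of_real \<tau>"
  have R: "RR \<tau> \<xi> = cmod D" by (simp add: RR_def D_def u_def)
  have g: "gker s1 \<tau> \<xi> - gker s2 \<tau> \<xi> = N / D" by (simp add: gker_def N_def D_def u_def diff_divide_distrib)
  have u: "0 \<le> u" by (simp add: u_def)
  have Rge: "\<bar>\<tau>\<bar> \<le> cmod D" "u \<le> cmod D" using RR_ge[of \<tau> \<xi>] unfolding R u_def by auto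
  have N1: "cmod N \<le> min 2 (\<bar>\<tau>\<bar> * h) + min 1 (u * h)"
  proof -
    have "cmod N \<le> cmod (cis (- \<tau> * s1) - cis (- \<tau> * s2)) + cmod (complex_of_real (exp (- s1 * u) - exp (- s2 * u)))"
      unfolding N_def by (rule norm_triangle_ineq4)
    also have "\<dots> \<le> min 2 (\<bar>\<tau>\<bar> * h) + min 1 (u * h)"
    proof (rule add_mono)
      have "\<bar>- \<tau> * s1 - - \<tau> * s2\<bar> = \<bar>\<tau>\<bar> * h" by (simp add: h_def abs_mult[symmetric] algebra_simps)
      then show "cmod (cis (- \<tau> * s1) - cis (- \<tau> * s2)) \<le> min 2 (\<bar>\<tau>\<bar> * h)"
        using cis_lip[of "- \<tau> * s1" "- \<tau> * s2"] cis_diff2 by simp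
      have e1: "\<bar>exp (- s1 * u) - exp (- s2 * u)\<bar> \<le> \<bar>- s1 * u - - s2 * u\<bar>"
        using s u by (intro exp_lip) (auto simp: mult_nonneg_nonneg)
      have "- s1 * u - - s2 * u = (s2 - s1) * u" by (simp add: algebra_simps)
      then have "\<bar>- s1 * u - - s2 * u\<bar> = u * h" using u by (simp add: h_def abs_mult abs_minus_commute)
      moreover have "\<bar>exp (- s1 * u) - exp (- s2 * u)\<bar> \<le> 1"
      proof -
        have "exp (- s1 * u) \<le> 1" "exp (- s2 * u) \<le> 1" using s u by (auto simp: mult_nonneg_nonneg)
        moreover have "0 < exp (- s1 * u)" "0 < exp (- s2 * u)" by auto
        ultimately show ?thesis by linarith
      qed
      ultimately show "cmod (complex_of_real (exp (- s1 * u) - exp (- s2 * u))) \<le> min 1 (u * h)"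
        using e1 by (simp only: norm_of_real min.bounded_iff)
    qed
    finally show ?thesis .
  qed
  have hpos: "0 \<le> h" by (simp add: h_def)
  have N3: "cmod N \<le> 3 * min 1 (cmod D * h)"
  proof -
    have a1: "\<bar>\<tau>\<bar> * h \<le> cmod D * h" "u * h \<le> cmod D * h" "0 \<le> cmod D * h"
      using Rge hpos by (auto intro: mult_right_mono)
    have "min 2 (\<bar>\<tau>\<bar> * h) \<le> 2 * min 1 (cmod D * h)"
      using a1 by (auto simp: min_def)
    moreover have "min 1 (u * h) \<le> min 1 (cmod D * h)"
      using a1 by (auto simp: min_def)
    ultimately show ?thesis using N1 by linarith
  qed
  show ?thesis
  proof (cases "D = 0")
    case True then show ?thesis using s by (simp add: g R)
  next
    case False
    then have Dp: "0 < cmod D" by simp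
    have "cmod (gker s1 \<tau> \<xi> - gker s2 \<tau> \<xi>) = cmod N / cmod D" by (simp add: g norm_divide)
    also have "\<dots> \<le> 3 * min 1 (cmod D * h) / cmod D" using N3 Dp by (simp add: divide_right_mono)
    also have "\<dots> = 3 * min (1 / cmod D) h"
      using Dp by (simp add: min_def field_simps)
    finally show ?thesis unfolding R h_def .
  qed
qed

lemma tonelli_bound:
  fixes F :: "real \<times> 'b::euclidean_space \<Rightarrow> ennreal"
  assumes F[measurable]: "F \<in> borel_measurable borel"
    and G: "\<And>\<xi>. (\<integral>\<^sup>+\<tau>. F (\<tau>, \<xi>) \<partial>lborel) \<le> G \<xi>"
  shows "(\<integral>\<^sup>+z. F z \<partial>lborel) \<le> (\<integral>\<^sup>+\<xi>. G \<xi> \<partial>lborel)"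
proof -
  have "(\<integral>\<^sup>+z. F z \<partial>(lborel::(real \<times> 'b) measure)) = (\<integral>\<^sup>+z. F z \<partial>(lborel \<Otimes>\<^sub>M lborel))"
    by (simp add: lborel_prod)
  also have "\<dots> = (\<integral>\<^sup>+\<xi>. \<integral>\<^sup>+\<tau>. F (\<tau>, \<xi>) \<partial>lborel \<partial>lborel)"
    by (rule lborel_pair.nn_integral_snd[symmetric]) (use F in \<open>simp add: lborel_prod\<close>)
  also have "\<dots> \<le> (\<integral>\<^sup>+\<xi>. G \<xi> \<partial>lborel)"
    by (rule nn_integral_mono) (rule G)
  finally show ?thesis .
qed

lemma RR_pos: "\<xi> \<noteq> 0 \<Longrightarrow> 0 < RR \<tau> \<xi>"
  using RR_ge[of \<tau> \<xi>] by (smt (verit) zero_less_norm_iff zero_less_power)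

lemma minsq_bump:
  assumes A: "0 < A" and T: "0 < T" and h: "A = 1 / T \<or> (\<xi> \<noteq> 0 \<and> A = (norm \<xi>)\<^sup>2)"
  shows "(min T (1 / RR \<tau> \<xi>))\<^sup>2 \<le> bump A \<tau>"
proof (cases "\<bar>\<tau>\<bar> \<le> A")
  case True
  have "min T (1 / RR \<tau> \<xi>) \<le> 1 / A"
  proof (cases "A = 1 / T")
    case True then show ?thesis by simp
  next
    case False
    with h have "\<xi> \<noteq> 0" "A = (norm \<xi>)\<^sup>2" by auto
    then have "A \<le> RR \<tau> \<xi>" using RR_ge[of \<tau> \<xi>] by simp
    then have "1 / RR \<tau> \<xi> \<le> 1 / A" using A by (simp add: frac_le)
    then show ?thesis by simp
  qed
  moreover have "0 \<le> min T (1 / RR \<tau> \<xi>)" using T RR_nonneg[of \<tau> \<xi>] by simp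
  ultimately have "(min T (1 / RR \<tau> \<xi>))\<^sup>2 \<le> (1/A)\<^sup>2" by (rule power_mono)
  then show ?thesis using True by (simp add: bump_def power_divide)
next
  case False
  then have tp: "0 < \<bar>\<tau>\<bar>" using A by simp
  have "\<bar>\<tau>\<bar> \<le> RR \<tau> \<xi>" using RR_ge[of \<tau> \<xi>] by simp
  then have "1 / RR \<tau> \<xi> \<le> 1 / \<bar>\<tau>\<bar>" using tp by (simp add: frac_le)
  then have "min T (1 / RR \<tau> \<xi>) \<le> 1 / \<bar>\<tau>\<bar>" by simp
  moreover have "0 \<le> min T (1 / RR \<tau> \<xi>)" using T RR_nonneg[of \<tau> \<xi>] by simp
  ultimately have "(min T (1 / RR \<tau> \<xi>))\<^sup>2 \<le> (1/\<bar>\<tau>\<bar>)\<^sup>2" by (rule power_mono)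
  then show ?thesis using False by (simp add: bump_def power_divide)
qed

lemma inner_minsq:
  assumes T: "0 < T" and A: "0 < A" and h: "A = 1 / T \<or> (\<xi> \<noteq> 0 \<and> A = (norm \<xi>)\<^sup>2)"
  shows "(\<integral>\<^sup>+\<tau>. ennreal ((min T (1 / RR \<tau> \<xi>))\<^sup>2) \<partial>lborel) \<le> ennreal (4 / A)"
proof -
  have "(\<integral>\<^sup>+\<tau>. ennreal ((min T (1 / RR \<tau> \<xi>))\<^sup>2) \<partial>lborel) \<le> (\<integral>\<^sup>+\<tau>. ennreal (bump A \<tau>) \<partial>lborel)"
    by (rule nn_integral_mono) (use minsq_bump[OF A T h] in \<open>simp add: ennreal_leI\<close>)
  also have "\<dots> \<le> ennreal (4 / A)" by (rule nn_int_bump[OF A])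
  finally show ?thesis .
qed

lemma nn_cmult_real:
  fixes f :: "'a \<Rightarrow> real"
  assumes c: "0 \<le> c" and f[measurable]: "f \<in> borel_measurable M"
  shows "(\<integral>\<^sup>+x. ennreal (c * f x) \<partial>M) = ennreal c * (\<integral>\<^sup>+x. ennreal (f x) \<partial>M)"
proof -
  have "(\<integral>\<^sup>+x. ennreal (c * f x) \<partial>M) = (\<integral>\<^sup>+x. ennreal c * ennreal (f x) \<partial>M)"
    using c by (simp add: ennreal_mult')
  also have "\<dots> = ennreal c * (\<integral>\<^sup>+x. ennreal (f x) \<partial>M)"
    by (rule nn_integral_cmult) measurable
  finally show ?thesis .
qed

lemma nn_add_real:
  fixes f g :: "'a \<Rightarrow> real"
  assumes [measurable]: "f \<in> borel_measurable M" "g \<in> borel_measurable M"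
    and "\<And>x. 0 \<le> f x" "\<And>x. 0 \<le> g x"
  shows "(\<integral>\<^sup>+x. ennreal (f x + g x) \<partial>M) = (\<integral>\<^sup>+x. ennreal (f x) \<partial>M) + (\<integral>\<^sup>+x. ennreal (g x) \<partial>M)"
  using assms by (subst nn_integral_add[symmetric]) (auto intro!: nn_integral_cong simp: ennreal_plus)

lemma fst_meas[measurable]: "(\<lambda>z. fst z) \<in> borel_measurable (borel :: ('a::topological_space \<times> 'b::topological_space) measure)"
  by (intro borel_measurable_continuous_onI continuous_intros)
lemma snd_meas[measurable]: "(\<lambda>z. snd z) \<in> (borel :: ('a::topological_space \<times> 'b::topological_space) measure) \<rightarrow>\<^sub>M borel"
  by (intro borel_measurable_continuous_onI continuous_intros)

lemma RR_meas[measurable]: "(\<lambda>z. RR (fst z) (snd z)) \<in> borel_measurable (borel :: (real \<times> (real ^ 'k)) measure)"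
  unfolding RR_def by (intro borel_measurable_continuous_onI continuous_intros)

definition wt :: "real \<Rightarrow> real ^ 'k \<Rightarrow> real" where
  "wt \<beta> \<xi> = norm \<xi> powr (- (real CARD('k) - \<beta>))"

lemma wt_nonneg: "0 \<le> wt \<beta> \<xi>" by (simp add: wt_def)

lemma int_N0:
  fixes T \<beta> \<gamma> :: real
  assumes T: "0 < T" and b: "0 < \<beta>" "\<beta> \<le> CARD('k::finite)" "\<beta> < 2" and g: "0 \<le> \<gamma>" "\<gamma> < 2 - \<beta>"
  shows "(\<integral>\<^sup>+z. ennreal (norm (snd z) powr \<gamma> * (min T (1 / RR (fst z) (snd z)))\<^sup>2 * wt \<beta> (snd z))
           \<partial>(lborel :: (real \<times> (real ^ 'k)) measure)) < \<infinity>"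
proof -
  define n where "n = real CARD('k)"
  define c where "c \<xi> = norm \<xi> powr \<gamma> * wt \<beta> \<xi>" for \<xi> :: "real ^ 'k"
  have c0: "0 \<le> c \<xi>" for \<xi> by (simp add: c_def wt_nonneg)
  define G where "G \<xi> = c \<xi> * (if norm \<xi> \<le> 1 then 4 * T else 4 / (norm \<xi>)\<^sup>2)" for \<xi> :: "real ^ 'k"
  have step1: "(\<integral>\<^sup>+z. ennreal (norm (snd z) powr \<gamma> * (min T (1 / RR (fst z) (snd z)))\<^sup>2 * wt \<beta> (snd z))
           \<partial>(lborel :: (real \<times> (real ^ 'k)) measure)) \<le> (\<integral>\<^sup>+\<xi>. ennreal (G \<xi>) \<partial>lborel)"
  proof (rule tonelli_bound)
    show "(\<lambda>z. ennreal (norm (snd z) powr \<gamma> * (min T (1 / RR (fst z) (snd z)))\<^sup>2 * wt \<beta> (snd z))) \<in> borel_measurable borel"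
      unfolding wt_def by measurable
    fix \<xi> :: "real ^ 'k"
    have RRm1[measurable]: "(\<lambda>\<tau>. RR \<tau> \<xi>) \<in> borel_measurable borel" unfolding RR_def by measurable
    have "(\<integral>\<^sup>+\<tau>. ennreal (norm (snd (\<tau>, \<xi>)) powr \<gamma> * (min T (1 / RR (fst (\<tau>, \<xi>)) (snd (\<tau>, \<xi>))))\<^sup>2 * wt \<beta> (snd (\<tau>, \<xi>))) \<partial>lborel)
        = (\<integral>\<^sup>+\<tau>. ennreal (c \<xi> * (min T (1 / RR \<tau> \<xi>))\<^sup>2) \<partial>lborel)"
      by (simp add: c_def mult_ac)
    also have "\<dots> = ennreal (c \<xi>) * (\<integral>\<^sup>+\<tau>. ennreal ((min T (1 / RR \<tau> \<xi>))\<^sup>2) \<partial>lborel)"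
      by (rule nn_cmult_real[OF c0]) measurable
    also have "\<dots> \<le> ennreal (G \<xi>)"
    proof (cases "\<xi> = 0")
      case True then show ?thesis by (simp add: c_def wt_def G_def)
    next
      case False
      show ?thesis
      proof (cases "norm \<xi> \<le> 1")
        case True
        have "(\<integral>\<^sup>+\<tau>. ennreal ((min T (1 / RR \<tau> \<xi>))\<^sup>2) \<partial>lborel) \<le> ennreal (4 / (1 / T))"
          by (rule inner_minsq) (use T in auto)
        then have "ennreal (c \<xi>) * (\<integral>\<^sup>+\<tau>. ennreal ((min T (1 / RR \<tau> \<xi>))\<^sup>2) \<partial>lborel) \<le> ennreal (c \<xi>) * ennreal (4 * T)"
          by (simp add: mult_left_mono)
        also have "\<dots> = ennreal (G \<xi>)" using True c0 T by (simp add: G_def ennreal_mult)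
        finally show ?thesis .
      next
        case False'': False
        have "(\<integral>\<^sup>+\<tau>. ennreal ((min T (1 / RR \<tau> \<xi>))\<^sup>2) \<partial>lborel) \<le> ennreal (4 / (norm \<xi>)\<^sup>2)"
          by (rule inner_minsq) (use T False in auto)
        then have "ennreal (c \<xi>) * (\<integral>\<^sup>+\<tau>. ennreal ((min T (1 / RR \<tau> \<xi>))\<^sup>2) \<partial>lborel) \<le> ennreal (c \<xi>) * ennreal (4 / (norm \<xi>)\<^sup>2)"
          by (simp add: mult_left_mono)
        also have "\<dots> = ennreal (G \<xi>)" using False'' c0[of \<xi>] ennreal_mult[of "c \<xi>" "4 / (norm \<xi>)\<^sup>2"] by (simp add: G_def)
        finally show ?thesis .
      qed
    qed
    finally show "(\<integral>\<^sup>+\<tau>. ennreal (norm (snd (\<tau>, \<xi>)) powr \<gamma> * (min T (1 / RR (fst (\<tau>, \<xi>)) (snd (\<tau>, \<xi>))))\<^sup>2 * wt \<beta> (snd (\<tau>, \<xi>))) \<partial>lborel) \<le> ennreal (G \<xi>)" .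
  qed
  define f1 where "f1 \<xi> = norm \<xi> powr (- (n - \<beta>)) * indicator {x. norm x \<le> 1} \<xi>" for \<xi> :: "real ^ 'k"
  define f2 where "f2 \<xi> = norm \<xi> powr (- (n - \<beta> - \<gamma> + 2)) * indicator {x. 1 \<le> norm x} \<xi>" for \<xi> :: "real ^ 'k"
  have f1m[measurable]: "f1 \<in> borel_measurable borel" unfolding f1_def by measurable
  have f2m[measurable]: "f2 \<in> borel_measurable borel" unfolding f2_def by measurable
  have step2: "(\<integral>\<^sup>+\<xi>. ennreal (G \<xi>) \<partial>lborel) \<le> (\<integral>\<^sup>+\<xi>. ennreal (4 * T * f1 \<xi> + 4 * f2 \<xi>) \<partial>lborel)"
  proof (rule nn_integral_mono, rule ennreal_leI)
    fix \<xi> :: "real ^ 'k"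
    show "G \<xi> \<le> 4 * T * f1 \<xi> + 4 * f2 \<xi>"
    proof (cases "\<xi> = 0")
      case True then show ?thesis by (simp add: G_def c_def f1_def f2_def)
    next
      case False
      then have np: "0 < norm \<xi>" by simp
      have f2p: "0 \<le> f2 \<xi>" "0 \<le> f1 \<xi>" by (simp_all add: f2_def f1_def)
      show ?thesis
      proof (cases "norm \<xi> \<le> 1")
        case True
        have "norm \<xi> powr \<gamma> \<le> 1" using True g by (intro powr_le1) auto
        then have "c \<xi> \<le> norm \<xi> powr (- (n - \<beta>))"
          unfolding c_def wt_def n_def using mult_right_mono[of "norm \<xi> powr \<gamma>" 1 "norm \<xi> powr (- (real CARD('k) - \<beta>))"] by simp
        then have "G \<xi> \<le> 4 * T * f1 \<xi>" using True T by (simp add: G_def f1_def)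
        then show ?thesis using f2p by simp
      next
        case False
        have ex: "- (n - \<beta> - \<gamma> + 2) = (\<gamma> + (- (n - \<beta>))) - 2" by simp
        have "norm \<xi> powr (- (n - \<beta> - \<gamma> + 2)) = norm \<xi> powr \<gamma> * norm \<xi> powr (- (n - \<beta>)) / (norm \<xi>)\<^sup>2"
          unfolding ex powr_diff powr_add using np by (simp add: powr_numeral)
        then have "c \<xi> * (4 / (norm \<xi>)\<^sup>2) = 4 * norm \<xi> powr (- (n - \<beta> - \<gamma> + 2))"
          by (simp add: c_def wt_def n_def)
        then have "G \<xi> = 4 * f2 \<xi>" using False by (simp add: G_def f2_def)
        then show ?thesis using f2p T by simp
      qed
    qed
  qed
  also have "\<dots> = (\<integral>\<^sup>+\<xi>. ennreal (4 * T * f1 \<xi>) \<partial>lborel) + (\<integral>\<^sup>+\<xi>. ennreal (4 * f2 \<xi>) \<partial>lborel)"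
    by (rule nn_add_real) (use T in \<open>auto simp: f1_def f2_def\<close>)
  also have "\<dots> = ennreal (4 * T) * (\<integral>\<^sup>+\<xi>. ennreal (f1 \<xi>) \<partial>lborel) + ennreal 4 * (\<integral>\<^sup>+\<xi>. ennreal (f2 \<xi>) \<partial>lborel)"
  proof -
    have "(\<integral>\<^sup>+\<xi>. ennreal (4 * T * f1 \<xi>) \<partial>lborel) = ennreal (4 * T) * (\<integral>\<^sup>+\<xi>. ennreal (f1 \<xi>) \<partial>lborel)"
      by (rule nn_cmult_real) (use T in auto)
    moreover have "(\<integral>\<^sup>+\<xi>. ennreal (4 * f2 \<xi>) \<partial>lborel) = ennreal 4 * (\<integral>\<^sup>+\<xi>. ennreal (f2 \<xi>) \<partial>lborel)"
      by (rule nn_cmult_real) auto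
    ultimately show ?thesis by simp
  qed
  also have "\<dots> < \<infinity>"
  proof -
    have "(\<integral>\<^sup>+\<xi>. ennreal (f1 \<xi>) \<partial>lborel) < \<infinity>"
    proof -
      have "(\<integral>\<^sup>+\<xi>. ennreal (f1 \<xi>) \<partial>lborel) \<le> ennreal (unit_ball_vol DIM(real^'k) * 2 powr (n - \<beta>) / (1 - 2 powr ((n - \<beta>) - DIM(real^'k))) * 1 powr (DIM(real^'k) - (n - \<beta>)))"
        unfolding f1_def using radial_small[of "n - \<beta>" 1, where 'a="real^'k"] b by (simp add: n_def)
      then show ?thesis using top.not_eq_extremum by (auto simp: less_top[symmetric] top_unique)
    qed
    moreover have "(\<integral>\<^sup>+\<xi>. ennreal (f2 \<xi>) \<partial>lborel) < \<infinity>"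
    proof -
      have "(\<integral>\<^sup>+\<xi>. ennreal (f2 \<xi>) \<partial>lborel) \<le> ennreal (unit_ball_vol DIM(real^'k) * 2 powr DIM(real^'k) / (1 - 2 powr (DIM(real^'k) - (n - \<beta> - \<gamma> + 2))) * 1 powr (DIM(real^'k) - (n - \<beta> - \<gamma> + 2)))"
        unfolding f2_def using radial_large[of "n - \<beta> - \<gamma> + 2" 1, where 'a="real^'k"] b g by (simp add: n_def)
      then show ?thesis using top.not_eq_extremum by (auto simp: less_top[symmetric] top_unique)
    qed
    ultimately show ?thesis by (simp add: ennreal_mult_eq_top_iff less_top[symmetric])
  qed
  finally show ?thesis using step1 by (meson le_less_trans)
qed

lemma RR_interp:
  assumes xi: "\<xi> \<noteq> 0" and tau: "\<tau> \<noteq> 0" and th: "0 < \<theta>" "\<theta> < 1"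
  shows "1 / RR \<tau> \<xi> \<le> ((norm \<xi>)\<^sup>2) powr (-\<theta>) * \<bar>\<tau>\<bar> powr (\<theta> - 1)"
proof -
  define u where "u = (norm \<xi>)\<^sup>2"
  define R where "R = RR \<tau> \<xi>"
  have u: "0 < u" using xi by (simp add: u_def)
  have R: "0 < R" using RR_pos[OF xi] by (simp add: R_def)
  have uR: "u \<le> R" "\<bar>\<tau>\<bar> \<le> R" using RR_ge[of \<tau> \<xi>] by (auto simp: u_def R_def)
  have "u powr \<theta> * \<bar>\<tau>\<bar> powr (1 - \<theta>) \<le> R powr \<theta> * R powr (1 - \<theta>)"
    using uR th u by (intro mult_mono powr_mono2) auto
  also have "\<dots> = R" using R by (simp add: powr_add[symmetric])
  finally have le: "u powr \<theta> * \<bar>\<tau>\<bar> powr (1 - \<theta>) \<le> R" .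
  have pos: "0 < u powr \<theta> * \<bar>\<tau>\<bar> powr (1 - \<theta>)" using u tau by simp
  have "1 / R \<le> 1 / (u powr \<theta> * \<bar>\<tau>\<bar> powr (1 - \<theta>))"
    using le pos by (intro divide_left_mono) auto
  also have "\<dots> = u powr (-\<theta>) * \<bar>\<tau>\<bar> powr (\<theta> - 1)"
    using u tau by (simp add: powr_minus divide_inverse inverse_mult_distrib powr_diff)
  finally show ?thesis by (simp add: u_def R_def)
qed

lemma inner_N2:
  assumes h: "0 < h" and xi: "\<xi> \<noteq> 0" and th: "0 < \<theta>" "\<theta> < 1"
  shows "(\<integral>\<^sup>+\<tau>. ennreal (min (1 / RR \<tau> \<xi>) h * (1 / RR \<tau> \<xi>)) \<partial>lborel)
     \<le> ennreal (if h powr (-1/2) \<le> norm \<xi> then 4 * norm \<xi> powr (-2)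
                 else 2 * h powr (1 - \<theta>) * norm \<xi> powr (-2 * \<theta>) / \<theta> + 4 * h)"
proof -
  define u where "u = (norm \<xi>)\<^sup>2"
  have u: "0 < u" using xi by (simp add: u_def)
  have Rp: "0 < RR \<tau> \<xi>" for \<tau> using RR_pos[OF xi] .
  have RRm1[measurable]: "(\<lambda>\<tau>. RR \<tau> \<xi>) \<in> borel_measurable borel" unfolding RR_def by measurable
  have A: "(\<integral>\<^sup>+\<tau>. ennreal (min (1 / RR \<tau> \<xi>) h * (1 / RR \<tau> \<xi>)) \<partial>lborel) \<le> ennreal (4 * norm \<xi> powr (-2))"
  proof -
    have "(\<integral>\<^sup>+\<tau>. ennreal (min (1 / RR \<tau> \<xi>) h * (1 / RR \<tau> \<xi>)) \<partial>lborel) \<le> (\<integral>\<^sup>+\<tau>. ennreal (bump u \<tau>) \<partial>lborel)"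
    proof (rule nn_integral_mono, rule ennreal_leI)
      fix \<tau>
      have "min (1 / RR \<tau> \<xi>) h * (1 / RR \<tau> \<xi>) \<le> (1 / RR \<tau> \<xi>) * (1 / RR \<tau> \<xi>)"
        using Rp[of \<tau>] by (intro mult_right_mono) auto
      also have "\<dots> = (min (1 / RR \<tau> \<xi>) (1 / RR \<tau> \<xi>))\<^sup>2" by (simp only: min.idem power2_eq_square)
      also have "\<dots> \<le> bump u \<tau>"
        by (rule minsq_bump) (use u xi Rp[of \<tau>] in \<open>auto simp: u_def\<close>)
      finally show "min (1 / RR \<tau> \<xi>) h * (1 / RR \<tau> \<xi>) \<le> bump u \<tau>" .
    qed
    also have "\<dots> \<le> ennreal (4 / u)" by (rule nn_int_bump[OF u])
    also have "4 / u = 4 * norm \<xi> powr (-2)"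
      using xi by (simp add: u_def powr_minus_divide powr_numeral)
    finally show ?thesis .
  qed
  define L where "L = 1 / h"
  have L: "0 < L" using h by (simp add: L_def)
  have B: "(\<integral>\<^sup>+\<tau>. ennreal (min (1 / RR \<tau> \<xi>) h * (1 / RR \<tau> \<xi>)) \<partial>lborel)
      \<le> ennreal (2 * h powr (1 - \<theta>) * norm \<xi> powr (-2 * \<theta>) / \<theta> + 4 * h)"
  proof -
    define P where "P \<tau> = (if \<bar>\<tau>\<bar> \<le> L then \<bar>\<tau>\<bar> powr (\<theta> - 1) else 0)" for \<tau> :: real
    have Pm[measurable]: "P \<in> borel_measurable borel" unfolding P_def by measurable
    have P0: "0 \<le> P \<tau>" for \<tau> by (simp add: P_def)
    have c0: "0 \<le> h * u powr (-\<theta>)" using h by simp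
    have "(\<integral>\<^sup>+\<tau>. ennreal (min (1 / RR \<tau> \<xi>) h * (1 / RR \<tau> \<xi>)) \<partial>lborel)
        \<le> (\<integral>\<^sup>+\<tau>. ennreal (h * u powr (-\<theta>) * P \<tau> + bump L \<tau>) \<partial>lborel)"
    proof (rule nn_integral_mono_AE)
      show "AE \<tau> in lborel. ennreal (min (1 / RR \<tau> \<xi>) h * (1 / RR \<tau> \<xi>)) \<le> ennreal (h * u powr (-\<theta>) * P \<tau> + bump L \<tau>)"
        using AE_lborel_singleton[of "0::real"]
      proof (rule eventually_mono)
        fix \<tau> :: real assume tau: "\<tau> \<noteq> 0"
        have bump0: "0 \<le> bump L \<tau>" by (simp add: bump_def)
        show "ennreal (min (1 / RR \<tau> \<xi>) h * (1 / RR \<tau> \<xi>)) \<le> ennreal (h * u powr (-\<theta>) * P \<tau> + bump L \<tau>)"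
        proof (rule ennreal_leI, cases "\<bar>\<tau>\<bar> \<le> L")
          case True
          have "min (1 / RR \<tau> \<xi>) h * (1 / RR \<tau> \<xi>) \<le> h * (1 / RR \<tau> \<xi>)"
            using Rp[of \<tau>] by (intro mult_right_mono) auto
          also have "\<dots> \<le> h * (u powr (-\<theta>) * \<bar>\<tau>\<bar> powr (\<theta> - 1))"
            using RR_interp[OF xi tau th] h by (intro mult_left_mono) (auto simp: u_def)
          also have "\<dots> = h * u powr (-\<theta>) * P \<tau>" using True by (simp add: P_def)
          finally show "min (1 / RR \<tau> \<xi>) h * (1 / RR \<tau> \<xi>) \<le> h * u powr (-\<theta>) * P \<tau> + bump L \<tau>"
            using bump0 by linarith
        next
          case False
          have "min (1 / RR \<tau> \<xi>) h * (1 / RR \<tau> \<xi>) \<le> (1 / RR \<tau> \<xi>) * (1 / RR \<tau> \<xi>)"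
            using Rp[of \<tau>] by (intro mult_right_mono) auto
          also have "\<dots> \<le> (1 / \<bar>\<tau>\<bar>) * (1 / \<bar>\<tau>\<bar>)"
          proof -
            have "1 / RR \<tau> \<xi> \<le> 1 / \<bar>\<tau>\<bar>" using RR_ge[of \<tau> \<xi>] tau by (simp add: frac_le)
            then show ?thesis using Rp[of \<tau>] by (intro mult_mono) auto
          qed
          also have "\<dots> = bump L \<tau>" using False by (simp add: bump_def power2_eq_square)
          finally show "min (1 / RR \<tau> \<xi>) h * (1 / RR \<tau> \<xi>) \<le> h * u powr (-\<theta>) * P \<tau> + bump L \<tau>"
            using P0[of \<tau>] c0 by (smt (verit) mult_nonneg_nonneg)
        qed
      qed
    qed
    also have "\<dots> = (\<integral>\<^sup>+\<tau>. ennreal (h * u powr (-\<theta>) * P \<tau>) \<partial>lborel) + (\<integral>\<^sup>+\<tau>. ennreal (bump L \<tau>) \<partial>lborel)"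
      by (rule nn_add_real) (use c0 P0 in \<open>auto simp: bump_def\<close>)
    also have "(\<integral>\<^sup>+\<tau>. ennreal (h * u powr (-\<theta>) * P \<tau>) \<partial>lborel) = ennreal (h * u powr (-\<theta>)) * (\<integral>\<^sup>+\<tau>. ennreal (P \<tau>) \<partial>lborel)"
      by (rule nn_cmult_real[OF c0]) measurable
    also have "\<dots> \<le> ennreal (h * u powr (-\<theta>)) * ennreal (2 * L powr \<theta> / \<theta>)"
      using nn_int_powr_sym[OF L th(1)] unfolding P_def by (intro mult_left_mono) auto
    also have "(\<integral>\<^sup>+\<tau>. ennreal (bump L \<tau>) \<partial>lborel) \<le> ennreal (4 / L)" by (rule nn_int_bump[OF L])
    also have "ennreal (h * u powr (-\<theta>)) * ennreal (2 * L powr \<theta> / \<theta>) + ennreal (4 / L)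
        = ennreal (2 * h powr (1 - \<theta>) * norm \<xi> powr (-2 * \<theta>) / \<theta> + 4 * h)"
    proof -
      have "u = norm \<xi> powr 2" using xi by (simp add: u_def powr_numeral)
      then have e1: "u powr (-\<theta>) = norm \<xi> powr (-2 * \<theta>)"
        by (simp only: powr_powr) simp
      have e2: "h * L powr \<theta> = h powr (1 - \<theta>)"
        using h by (simp add: L_def powr_divide powr_diff)
      have "h * u powr (-\<theta>) * (2 * L powr \<theta> / \<theta>) = 2 * (h * L powr \<theta>) * u powr (-\<theta>) / \<theta>" by simp
      then have "h * u powr (-\<theta>) * (2 * L powr \<theta> / \<theta>) = 2 * h powr (1 - \<theta>) * norm \<xi> powr (-2 * \<theta>) / \<theta>"
        unfolding e1 e2 .
      moreover have "4 / L = 4 * h" by (simp add: L_def)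
      ultimately show ?thesis using c0 th h L
        by (simp add: ennreal_mult[symmetric] ennreal_plus[symmetric] del: ennreal_plus)
    qed
    finally show ?thesis by (simp add: add_mono)
  qed
  show ?thesis using A B by simp
qed

lemma ennreal_4: "0 \<le> x \<Longrightarrow> ennreal (4 * x) = 4 * ennreal x"
  using ennreal_mult[of 4 x] by simp

lemma int_N2:
  fixes \<beta> :: real
  assumes b: "0 < \<beta>" "\<beta> \<le> CARD('k::finite)" "\<beta> < 2"
  shows "\<exists>K\<ge>0. \<forall>h>0. (\<integral>\<^sup>+z. ennreal (min (1 / RR (fst z) (snd z)) h * (1 / RR (fst z) (snd z)) * wt \<beta> (snd z))
           \<partial>(lborel :: (real \<times> (real ^ 'k)) measure)) \<le> ennreal (K * h powr ((2 - \<beta>) / 2))"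
proof -
  define n where "n = real CARD('k)"
  define V where "V = unit_ball_vol DIM(real^'k)"
  have DIMn: "real DIM(real^'k) = n" by (simp add: n_def)
  define \<theta> where "\<theta> = \<beta> / 4"
  have th: "0 < \<theta>" "\<theta> < 1" using b by (auto simp: \<theta>_def)
  define aL where "aL = n - \<beta> + 2"
  define a1 where "a1 = n - \<beta> + 2 * \<theta>"
  define a0 where "a0 = n - \<beta>"
  define CL where "CL = V * 2 powr n / (1 - 2 powr (n - aL))"
  define CS1 where "CS1 = V * 2 powr a1 / (1 - 2 powr (a1 - n))"
  define CS0 where "CS0 = V * 2 powr a0 / (1 - 2 powr (a0 - n))"
  have V0: "0 \<le> V" by (simp add: V_def)
  have q1: "2 powr (n - aL) < 1" "2 powr (a1 - n) < 1" "2 powr (a0 - n) < 1"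
    using b th powr_less_mono[of "n - aL" 0 2] powr_less_mono[of "a1 - n" 0 2] powr_less_mono[of "a0 - n" 0 2]
    by (auto simp: aL_def a1_def a0_def \<theta>_def)
  have C0: "0 \<le> CL" "0 \<le> CS1" "0 \<le> CS0" using V0 q1 by (auto simp: CL_def CS1_def CS0_def)
  define K where "K = 4 * CL + 2 * CS1 / \<theta> + 4 * CS0"
  have K0: "0 \<le> K" using C0 th by (simp add: K_def)
  have main: "(\<integral>\<^sup>+z. ennreal (min (1 / RR (fst z) (snd z)) h * (1 / RR (fst z) (snd z)) * wt \<beta> (snd z))
           \<partial>(lborel :: (real \<times> (real ^ 'k)) measure)) \<le> ennreal (K * h powr ((2 - \<beta>) / 2))" if h: "0 < h" for h
  proof -
    define r where "r = h powr (-1/2)"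
    have r: "0 < r" using h by (simp add: r_def)
    define c1 where "c1 = 2 * h powr (1 - \<theta>) / \<theta>"
    have c1: "0 \<le> c1" using th by (simp add: c1_def)
    define G where "G \<xi> = wt \<beta> \<xi> * (if r \<le> norm \<xi> then 4 * norm \<xi> powr (-2)
                 else 2 * h powr (1 - \<theta>) * norm \<xi> powr (-2 * \<theta>) / \<theta> + 4 * h)" for \<xi> :: "real ^ 'k"
    have step1: "(\<integral>\<^sup>+z. ennreal (min (1 / RR (fst z) (snd z)) h * (1 / RR (fst z) (snd z)) * wt \<beta> (snd z))
           \<partial>(lborel :: (real \<times> (real ^ 'k)) measure)) \<le> (\<integral>\<^sup>+\<xi>. ennreal (G \<xi>) \<partial>lborel)"
    proof (rule tonelli_bound)
      show "(\<lambda>z. ennreal (min (1 / RR (fst z) (snd z)) h * (1 / RR (fst z) (snd z)) * wt \<beta> (snd z))) \<in> borel_measurable borel"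
        unfolding wt_def by measurable
      fix \<xi> :: "real ^ 'k"
      have RRm1[measurable]: "(\<lambda>\<tau>. RR \<tau> \<xi>) \<in> borel_measurable borel" unfolding RR_def by measurable
      have "(\<integral>\<^sup>+\<tau>. ennreal (min (1 / RR (fst (\<tau>, \<xi>)) (snd (\<tau>, \<xi>))) h * (1 / RR (fst (\<tau>, \<xi>)) (snd (\<tau>, \<xi>))) * wt \<beta> (snd (\<tau>, \<xi>))) \<partial>lborel)
          = (\<integral>\<^sup>+\<tau>. ennreal (wt \<beta> \<xi> * (min (1 / RR \<tau> \<xi>) h * (1 / RR \<tau> \<xi>))) \<partial>lborel)"
        by (simp add: mult_ac)
      also have "\<dots> = ennreal (wt \<beta> \<xi>) * (\<integral>\<^sup>+\<tau>. ennreal (min (1 / RR \<tau> \<xi>) h * (1 / RR \<tau> \<xi>)) \<partial>lborel)"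
        by (rule nn_cmult_real[OF wt_nonneg]) measurable
      also have "\<dots> \<le> ennreal (G \<xi>)"
      proof (cases "\<xi> = 0")
        case True then show ?thesis by (simp add: wt_def G_def)
      next
        case False
        have "ennreal (wt \<beta> \<xi>) * (\<integral>\<^sup>+\<tau>. ennreal (min (1 / RR \<tau> \<xi>) h * (1 / RR \<tau> \<xi>)) \<partial>lborel)
           \<le> ennreal (wt \<beta> \<xi>) * ennreal (if h powr (-1/2) \<le> norm \<xi> then 4 * norm \<xi> powr (-2)
                 else 2 * h powr (1 - \<theta>) * norm \<xi> powr (-2 * \<theta>) / \<theta> + 4 * h)"
          by (intro mult_left_mono inner_N2 h False th) auto
        also have "\<dots> = ennreal (G \<xi>)"
          using wt_nonneg[of \<beta> \<xi>] h th by (subst ennreal_mult[symmetric]) (auto simp: G_def r_def)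
        finally show ?thesis .
      qed
      finally show "(\<integral>\<^sup>+\<tau>. ennreal (min (1 / RR (fst (\<tau>, \<xi>)) (snd (\<tau>, \<xi>))) h * (1 / RR (fst (\<tau>, \<xi>)) (snd (\<tau>, \<xi>))) * wt \<beta> (snd (\<tau>, \<xi>))) \<partial>lborel) \<le> ennreal (G \<xi>)" .
    qed
    define fL where "fL \<xi> = norm \<xi> powr (- aL) * indicator {x. r \<le> norm x} \<xi>" for \<xi> :: "real ^ 'k"
    define f1 where "f1 \<xi> = norm \<xi> powr (- a1) * indicator {x. norm x \<le> r} \<xi>" for \<xi> :: "real ^ 'k"
    define f0 where "f0 \<xi> = norm \<xi> powr (- a0) * indicator {x. norm x \<le> r} \<xi>" for \<xi> :: "real ^ 'k"
    have fm[measurable]: "fL \<in> borel_measurable borel" "f1 \<in> borel_measurable borel" "f0 \<in> borel_measurable borel"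
      unfolding fL_def f1_def f0_def by measurable
    have fpos: "0 \<le> fL \<xi>" "0 \<le> f1 \<xi>" "0 \<le> f0 \<xi>" for \<xi> by (simp_all add: fL_def f1_def f0_def)
    have step2: "(\<integral>\<^sup>+\<xi>. ennreal (G \<xi>) \<partial>lborel) \<le> (\<integral>\<^sup>+\<xi>. ennreal (4 * fL \<xi> + (c1 * f1 \<xi> + 4 * h * f0 \<xi>)) \<partial>lborel)"
    proof (rule nn_integral_mono, rule ennreal_leI)
      fix \<xi> :: "real ^ 'k"
      show "G \<xi> \<le> 4 * fL \<xi> + (c1 * f1 \<xi> + 4 * h * f0 \<xi>)"
      proof (cases "\<xi> = 0")
        case True then show ?thesis by (simp add: G_def wt_def fL_def f1_def f0_def)
      next
        case False
        then have np: "0 < norm \<xi>" by simp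
        have other: "0 \<le> c1 * f1 \<xi> + 4 * h * f0 \<xi>" "0 \<le> fL \<xi>" using c1 h fpos[of \<xi>] by auto
        show ?thesis
        proof (cases "r \<le> norm \<xi>")
          case True
          have "G \<xi> = 4 * (norm \<xi> powr (- a0) * norm \<xi> powr (-2))" using True by (simp add: G_def wt_def a0_def n_def)
          also have "\<dots> = 4 * fL \<xi>" using True by (simp add: fL_def aL_def a0_def powr_add[symmetric])
          finally show ?thesis using other by simp
        next
          case False
          have "G \<xi> = c1 * (norm \<xi> powr (- a0) * norm \<xi> powr (-2 * \<theta>)) + 4 * h * norm \<xi> powr (- a0)"
            using False by (simp add: G_def wt_def a0_def n_def c1_def algebra_simps)
          also have "\<dots> = c1 * f1 \<xi> + 4 * h * f0 \<xi>" using False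
            by (simp add: f1_def f0_def a1_def a0_def powr_add[symmetric])
          finally show ?thesis using other by simp
        qed
      qed
    qed
    also have "\<dots> = ennreal 4 * (\<integral>\<^sup>+\<xi>. ennreal (fL \<xi>) \<partial>lborel) + (ennreal c1 * (\<integral>\<^sup>+\<xi>. ennreal (f1 \<xi>) \<partial>lborel)
         + ennreal (4 * h) * (\<integral>\<^sup>+\<xi>. ennreal (f0 \<xi>) \<partial>lborel))"
    proof -
      have "(\<integral>\<^sup>+\<xi>. ennreal (4 * fL \<xi> + (c1 * f1 \<xi> + 4 * h * f0 \<xi>)) \<partial>lborel)
         = (\<integral>\<^sup>+\<xi>. ennreal (4 * fL \<xi>) \<partial>lborel) + (\<integral>\<^sup>+\<xi>. ennreal (c1 * f1 \<xi> + 4 * h * f0 \<xi>) \<partial>lborel)"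
        by (rule nn_add_real) (use fpos c1 h in auto)
      also have "(\<integral>\<^sup>+\<xi>. ennreal (c1 * f1 \<xi> + 4 * h * f0 \<xi>) \<partial>lborel)
         = (\<integral>\<^sup>+\<xi>. ennreal (c1 * f1 \<xi>) \<partial>lborel) + (\<integral>\<^sup>+\<xi>. ennreal (4 * h * f0 \<xi>) \<partial>lborel)"
        by (rule nn_add_real) (use fpos c1 h in auto)
      also have "(\<integral>\<^sup>+\<xi>. ennreal (4 * fL \<xi>) \<partial>lborel) = ennreal 4 * (\<integral>\<^sup>+\<xi>. ennreal (fL \<xi>) \<partial>lborel)"
        by (rule nn_cmult_real) auto
      also have "(\<integral>\<^sup>+\<xi>. ennreal (c1 * f1 \<xi>) \<partial>lborel) = ennreal c1 * (\<integral>\<^sup>+\<xi>. ennreal (f1 \<xi>) \<partial>lborel)"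
        by (rule nn_cmult_real) (use c1 in auto)
      also have "(\<integral>\<^sup>+\<xi>. ennreal (4 * h * f0 \<xi>) \<partial>lborel) = ennreal (4 * h) * (\<integral>\<^sup>+\<xi>. ennreal (f0 \<xi>) \<partial>lborel)"
        by (rule nn_cmult_real) (use h in auto)
      finally show ?thesis .
    qed
    also have "\<dots> \<le> ennreal 4 * ennreal (CL * r powr (n - aL)) + (ennreal c1 * ennreal (CS1 * r powr (n - a1))
         + ennreal (4 * h) * ennreal (CS0 * r powr (n - a0)))"
    proof -
      have "(\<integral>\<^sup>+\<xi>. ennreal (fL \<xi>) \<partial>lborel) \<le> ennreal (CL * r powr (n - aL))"
        unfolding fL_def CL_def V_def using radial_large[of aL r, where 'a="real^'k"] b r
        by (simp add: DIMn aL_def n_def)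
      moreover have "(\<integral>\<^sup>+\<xi>. ennreal (f1 \<xi>) \<partial>lborel) \<le> ennreal (CS1 * r powr (n - a1))"
        unfolding f1_def CS1_def V_def using radial_small[of a1 r, where 'a="real^'k"] b r th
        by (simp add: DIMn a1_def n_def \<theta>_def)
      moreover have "(\<integral>\<^sup>+\<xi>. ennreal (f0 \<xi>) \<partial>lborel) \<le> ennreal (CS0 * r powr (n - a0))"
        unfolding f0_def CS0_def V_def using radial_small[of a0 r, where 'a="real^'k"] b r
        by (simp add: DIMn a0_def n_def)
      ultimately show ?thesis by (intro add_mono mult_left_mono) auto
    qed
    also have "\<dots> = ennreal (4 * (CL * r powr (n - aL)) + (c1 * (CS1 * r powr (n - a1)) + 4 * h * (CS0 * r powr (n - a0))))"
      using C0 c1 h r by (simp add: ennreal_4[symmetric] ennreal_mult[symmetric] ennreal_plus[symmetric] del: ennreal_plus)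
    also have "4 * (CL * r powr (n - aL)) + (c1 * (CS1 * r powr (n - a1)) + 4 * h * (CS0 * r powr (n - a0)))
        = K * h powr ((2 - \<beta>) / 2)"
    proof -
      have rp: "r powr x = h powr ((-1/2) * x)" for x unfolding r_def by (simp add: powr_powr)
      have e1: "r powr (n - aL) = h powr ((2 - \<beta>) / 2)"
      proof -
        have "(-1/2) * (n - aL) = (2 - \<beta>) / 2" by (simp add: aL_def field_simps)
        then show ?thesis by (simp only: rp)
      qed
      have e2: "h powr (1 - \<theta>) * r powr (n - a1) = h powr ((2 - \<beta>) / 2)"
      proof -
        have "(1 - \<theta>) + (-1/2) * (n - a1) = (2 - \<beta>) / 2" by (simp add: a1_def \<theta>_def field_simps)
        then show ?thesis by (simp only: rp powr_add[symmetric])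
      qed
      have e3: "h * r powr (n - a0) = h powr ((2 - \<beta>) / 2)"
      proof -
        have "1 + (-1/2) * (n - a0) = (2 - \<beta>) / 2" by (simp add: a0_def field_simps)
        moreover have "h = h powr 1" using h by simp
        ultimately show ?thesis by (metis rp powr_add)
      qed
      have "c1 * (CS1 * r powr (n - a1)) = 2 * CS1 / \<theta> * (h powr (1 - \<theta>) * r powr (n - a1))"
        by (simp add: c1_def)
      moreover have "4 * h * (CS0 * r powr (n - a0)) = 4 * CS0 * (h * r powr (n - a0))" by simp
      ultimately show ?thesis unfolding K_def e1 e2 e3 by (simp add: algebra_simps)
    qed
    finally show ?thesis using step1 by (meson order_trans)
  qed
  show ?thesis using K0 main by blast
qed

definition Fv :: "real \<Rightarrow> 'k::finite pt \<Rightarrow> 'k pt \<Rightarrow> real \<times> (real ^ 'k) \<Rightarrow> complex" where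
  "Fv \<beta> p q = (\<lambda>(\<tau>::real, \<xi>::real ^ 'k).
       cis (- (\<xi> \<bullet> (snd p - snd q))) * gker (fst p) \<tau> \<xi> * cnj (gker (fst q) \<tau> \<xi>)
       * complex_of_real ((norm \<xi>) powr (- (real CARD('k) - \<beta>))))"

lemma vcov_Fv: "vcov \<beta> p q = Re (integral\<^sup>L lborel (Fv \<beta> p q))"
  by (simp add: vcov_def Fv_def)

lemma cis_meas[measurable]: "cis \<in> borel_measurable borel"
  by (intro borel_measurable_continuous_onI continuous_intros)

lemma Fv_alt:
  fixes p q :: "'k::finite pt"
  shows "Fv \<beta> p q z = cis (- (snd z \<bullet> (snd p - snd q))) * gker (fst p) (fst z) (snd z) * cnj (gker (fst q) (fst z) (snd z))
       * complex_of_real ((norm (snd z)) powr (- (real CARD('k) - \<beta>)))"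
  by (cases z) (simp add: Fv_def)

lemma gker_meas[measurable]: "(\<lambda>z. gker s (fst z) (snd z)) \<in> borel_measurable (borel :: (real \<times> (real ^ 'k::finite)) measure)"
proof -
  have 1: "(\<lambda>z::real \<times> (real ^ 'k). cis (- fst z * s) - complex_of_real (exp (- s * (norm (snd z))\<^sup>2))) \<in> borel_measurable borel"
    by (intro borel_measurable_continuous_onI continuous_intros)
  have 2: "(\<lambda>z::real \<times> (real ^ 'k). complex_of_real ((norm (snd z))\<^sup>2) - \<i> * complex_of_real (fst z)) \<in> borel_measurable borel"
    by (intro borel_measurable_continuous_onI continuous_intros)
  show ?thesis unfolding gker_def using borel_measurable_divide[OF 1 2] by simp
qed

lemma cnj_meas[measurable]: "cnj \<in> borel_measurable borel"
  by (intro borel_measurable_continuous_onI continuous_intros)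

lemma Fv_meas[measurable]:
  fixes p q :: "'k::finite pt"
  shows "Fv \<beta> p q \<in> borel_measurable borel"
proof -
  have 1: "(\<lambda>z::real \<times> (real ^ 'k). cis (- (snd z \<bullet> (snd p - snd q)))) \<in> borel_measurable borel"
    by (intro borel_measurable_continuous_onI continuous_intros)
  have 2: "(\<lambda>z::real \<times> (real ^ 'k). norm (snd z)) \<in> borel_measurable borel"
    by (intro borel_measurable_continuous_onI continuous_intros)
  have 3: "(\<lambda>z::real \<times> (real ^ 'k). complex_of_real ((norm (snd z)) powr (- (real CARD('k) - \<beta>)))) \<in> borel_measurable borel"
    using 2 by measurable
  have 4: "(\<lambda>z. cnj (gker (fst q) (fst z) (snd z))) \<in> borel_measurable (borel :: (real \<times> (real ^ 'k::finite)) measure)"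
    using measurable_compose[OF gker_meas cnj_meas] by (simp add: comp_def)
  show ?thesis unfolding Fv_alt[abs_def]
    by (intro borel_measurable_times 1 3 4 gker_meas)
qed

lemma Fv_meas_l: "Fv \<beta> p q \<in> borel_measurable lborel"
  using Fv_meas by simp

lemma min2_powr:
  fixes z \<delta> :: real
  assumes "0 \<le> z" "0 < \<delta>" "\<delta> \<le> 1"
  shows "min 2 z \<le> 2 * z powr \<delta>"
proof (cases "1 \<le> z")
  case True
  then have "1 \<le> z powr \<delta>" using assms by (intro ge_one_powr_ge_zero) auto
  then show ?thesis by simp
next
  case False
  show ?thesis
  proof (cases "z = 0")
    case True then show ?thesis by simp
  next
    case False': False
    have "z powr 1 \<le> z powr \<delta>" using False assms by (intro powr_mono') auto
    then have "z \<le> z powr \<delta>" using False' assms by simp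
    moreover have "0 \<le> z powr \<delta>" by simp
    ultimately show ?thesis by linarith
  qed
qed

lemma gker_boundT:
  assumes "0 \<le> s" "s \<le> T"
  shows "cmod (gker s \<tau> \<xi>) \<le> 2 * min T (1 / RR \<tau> \<xi>)"
  using gker_bound[OF assms(1), of \<tau> \<xi>] assms(2) by linarith

lemma Fv_norm:
  fixes p q :: "'k::finite pt"
  assumes "0 \<le> fst p" "fst p \<le> T" "0 \<le> fst q" "fst q \<le> T"
  shows "norm (Fv \<beta> p q z) \<le> 4 * (norm (snd z) powr 0 * (min T (1 / RR (fst z) (snd z)))\<^sup>2 * wt \<beta> (snd z))"
proof (cases "snd z = 0")
  case True then show ?thesis by (simp add: Fv_alt)
next
  case False
  have "norm (Fv \<beta> p q z) = cmod (gker (fst p) (fst z) (snd z)) * cmod (gker (fst q) (fst z) (snd z)) * wt \<beta> (snd z)"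
    by (simp add: Fv_alt norm_mult wt_def)
  also have "\<dots> \<le> (2 * min T (1 / RR (fst z) (snd z))) * (2 * min T (1 / RR (fst z) (snd z))) * wt \<beta> (snd z)"
    using assms RR_nonneg[of "fst z" "snd z"] by (intro mult_mono gker_boundT assms wt_nonneg) auto
  finally show ?thesis using False by (simp add: power2_eq_square mult_ac)
qed

lemma Fv_integrable:
  fixes p q :: "'k::finite pt" and \<beta> :: real
  assumes "0 \<le> fst p" "fst p \<le> T" "0 \<le> fst q" "fst q \<le> T" and T: "0 < T"
    and b: "0 < \<beta>" "\<beta> \<le> CARD('k)" "\<beta> < 2"
  shows "integrable lborel (Fv \<beta> p q)"
proof (rule integrableI_bounded)
  show "Fv \<beta> p q \<in> borel_measurable lborel" by (rule Fv_meas_l)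
  have "(\<integral>\<^sup>+z. ennreal (norm (Fv \<beta> p q z)) \<partial>lborel) \<le>
      (\<integral>\<^sup>+z. ennreal (4 * (norm (snd z) powr 0 * (min T (1 / RR (fst z) (snd z)))\<^sup>2 * wt \<beta> (snd z))) \<partial>(lborel :: (real \<times> (real ^ 'k)) measure))"
    by (rule nn_integral_mono, rule ennreal_leI, rule Fv_norm) (use assms in auto)
  also have "\<dots> = ennreal 4 * (\<integral>\<^sup>+z. ennreal (norm (snd z) powr 0 * (min T (1 / RR (fst z) (snd z)))\<^sup>2 * wt \<beta> (snd z)) \<partial>(lborel :: (real \<times> (real ^ 'k)) measure))"
    by (rule nn_cmult_real) (auto simp: wt_def)
  also have "\<dots> < \<infinity>"
    using int_N0[OF T b, of 0] b by (simp add: ennreal_mult_less_top)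
  finally show "(\<integral>\<^sup>+z. ennreal (norm (Fv \<beta> p q z)) \<partial>lborel) < \<infinity>" .
qed

lemma Fv_diff_norm:
  fixes y1 y2 x :: "real ^ 'k::finite" and s1 s2 t \<beta> \<delta> T :: real
  assumes s: "0 \<le> s1" "s1 \<le> T" "0 \<le> s2" "s2 \<le> T" "0 \<le> t" "t \<le> T" and d: "0 < \<delta>" "\<delta> \<le> 1"
  shows "norm (Fv \<beta> (s1, y1) (t, x) z - Fv \<beta> (s2, y2) (t, x) z)
     \<le> 8 * norm (y1 - y2) powr \<delta> * (norm (snd z) powr \<delta> * (min T (1 / RR (fst z) (snd z)))\<^sup>2 * wt \<beta> (snd z))
       + 6 * (min (1 / RR (fst z) (snd z)) \<bar>s1 - s2\<bar> * (1 / RR (fst z) (snd z)) * wt \<beta> (snd z))"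
proof -
  obtain \<tau> \<xi> where z: "z = (\<tau>, \<xi>)" by (cases z)
  define A1 where "A1 = cis (- (\<xi> \<bullet> (y1 - x)))"
  define A2 where "A2 = cis (- (\<xi> \<bullet> (y2 - x)))"
  define g1 where "g1 = gker s1 \<tau> \<xi>"
  define g2 where "g2 = gker s2 \<tau> \<xi>"
  define gt where "gt = gker t \<tau> \<xi>"
  define w where "w = wt \<beta> \<xi>"
  define R where "R = RR \<tau> \<xi>"
  define m where "m = min T (1 / R)"
  define \<mu> where "\<mu> = min (1 / R) \<bar>s1 - s2\<bar>"
  define \<eta> where "\<eta> = norm (y1 - y2)"
  define X where "X = norm \<xi> powr \<delta> * \<eta> powr \<delta>"
  have R0: "0 \<le> R" by (simp add: R_def RR_nonneg)
  have T0: "0 \<le> T" using s by simp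
  have m0: "0 \<le> m" "m \<le> 1 / R" using R0 T0 by (auto simp: m_def)
  have mu0: "0 \<le> \<mu>" using R0 by (simp add: \<mu>_def)
  have w0: "0 \<le> w" by (simp add: w_def wt_nonneg)
  have X0: "0 \<le> X" by (simp add: X_def)
  have eq: "Fv \<beta> (s1, y1) (t, x) z - Fv \<beta> (s2, y2) (t, x) z = (A1 * g1 - A2 * g2) * (cnj gt * complex_of_real w)"
    by (simp add: Fv_alt z A1_def A2_def g1_def g2_def gt_def w_def wt_def algebra_simps)
  have nA2: "norm A2 = 1" by (simp add: A2_def)
  have a: "norm (A1 - A2) \<le> 2 * X"
  proof -
    have "norm (A1 - A2) \<le> \<bar>- (\<xi> \<bullet> (y1 - x)) - - (\<xi> \<bullet> (y2 - x))\<bar>" unfolding A1_def A2_def by (rule cis_lip)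
    also have "\<dots> = \<bar>\<xi> \<bullet> (y1 - y2)\<bar>" by (simp add: inner_diff_right)
    also have "\<dots> \<le> norm \<xi> * \<eta>" unfolding \<eta>_def by (rule Cauchy_Schwarz_ineq2)
    finally have 1: "norm (A1 - A2) \<le> norm \<xi> * \<eta>" .
    have 2: "norm (A1 - A2) \<le> 2" unfolding A1_def A2_def by (rule cis_diff2)
    have "norm (A1 - A2) \<le> min 2 (norm \<xi> * \<eta>)" using 1 2 by simp
    also have "\<dots> \<le> 2 * (norm \<xi> * \<eta>) powr \<delta>" by (rule min2_powr) (use d in \<open>auto simp: \<eta>_def\<close>)
    also have "\<dots> = 2 * X" by (simp add: X_def powr_mult \<eta>_def)
    finally show ?thesis .
  qed
  have G1: "norm g1 \<le> 2 * m" unfolding g1_def m_def R_def by (rule gker_boundT) (use s in auto)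
  have Gt: "norm gt \<le> 2 * m" unfolding gt_def m_def R_def by (rule gker_boundT) (use s in auto)
  have D: "norm (g1 - g2) \<le> 3 * \<mu>" unfolding g1_def g2_def \<mu>_def R_def by (rule gker_diff_bound) (use s in auto)
  have "norm (A1 * g1 - A2 * g2) = norm ((A1 - A2) * g1 + A2 * (g1 - g2))" by (simp add: algebra_simps)
  also have "\<dots> \<le> norm (A1 - A2) * norm g1 + norm (g1 - g2)"
    using norm_triangle_ineq[of "(A1 - A2) * g1" "A2 * (g1 - g2)"] by (simp add: norm_mult nA2)
  also have "\<dots> \<le> 2 * X * (2 * m) + 3 * \<mu>"
    using a G1 D X0 by (intro add_mono mult_mono) auto
  finally have n1: "norm (A1 * g1 - A2 * g2) \<le> 2 * X * (2 * m) + 3 * \<mu>" .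
  have "norm (Fv \<beta> (s1, y1) (t, x) z - Fv \<beta> (s2, y2) (t, x) z) = norm (A1 * g1 - A2 * g2) * norm gt * w"
    unfolding eq using w0 by (simp add: norm_mult)
  also have "\<dots> \<le> (2 * X * (2 * m) + 3 * \<mu>) * (2 * m) * w"
    using n1 Gt w0 m0 mu0 X0 by (intro mult_mono) auto
  also have "\<dots> = 8 * X * m\<^sup>2 * w + 6 * \<mu> * m * w" by (simp add: power2_eq_square algebra_simps)
  also have "\<dots> \<le> 8 * X * m\<^sup>2 * w + 6 * \<mu> * (1 / R) * w"
    using m0 mu0 w0 by (intro add_left_mono mult_right_mono mult_left_mono) auto
  finally show ?thesis
    by (simp add: z X_def \<eta>_def m_def \<mu>_def w_def R_def mult_ac)
qed

lemma ennreal_num_mult: "0 \<le> x \<Longrightarrow> ennreal (numeral n * x) = numeral n * ennreal x"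
  using ennreal_mult[of "numeral n" x] by simp

lemma vcov_holder:
  fixes \<beta> \<delta> T :: real
  assumes b: "0 < \<beta>" "\<beta> \<le> CARD('k::finite)" "\<beta> < 2" and d: "0 < \<delta>" "\<delta> \<le> 1" "\<delta> < 2 - \<beta>" and T: "0 < T"
  shows "\<exists>C. \<forall>s1 s2 t (y1::real ^ 'k) y2 x. 0 \<le> s1 \<longrightarrow> s1 \<le> T \<longrightarrow> 0 \<le> s2 \<longrightarrow> s2 \<le> T \<longrightarrow> 0 \<le> t \<longrightarrow> t \<le> T \<longrightarrow>
     \<bar>vcov \<beta> (s1, y1) (t, x) - vcov \<beta> (s2, y2) (t, x)\<bar> \<le> C * (\<bar>s1 - s2\<bar> powr ((2 - \<beta>) / 2) + norm (y1 - y2) powr \<delta>)"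
proof -
  define N1 where "N1 z = norm (snd z) powr \<delta> * (min T (1 / RR (fst z) (snd z)))\<^sup>2 * wt \<beta> (snd z)" for z :: "real \<times> (real ^ 'k)"
  define N2 where "N2 h z = min (1 / RR (fst z) (snd z)) h * (1 / RR (fst z) (snd z)) * wt \<beta> (snd z)" for h and z :: "real \<times> (real ^ 'k)"
  have N1m[measurable]: "N1 \<in> borel_measurable borel" unfolding N1_def wt_def by measurable
  have N2m[measurable]: "N2 h \<in> borel_measurable borel" for h unfolding N2_def wt_def by measurable
  have N10: "0 \<le> N1 z" for z by (simp add: N1_def wt_nonneg)
  have N20: "0 \<le> N2 h z" if "0 \<le> h" for h z using that RR_nonneg[of "fst z" "snd z"] by (simp add: N2_def wt_nonneg)
  have I1: "(\<integral>\<^sup>+z. ennreal (N1 z) \<partial>lborel) < \<infinity>"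
    unfolding N1_def using int_N0[OF T b, of \<delta>] d by simp
  define K1 where "K1 = enn2real (\<integral>\<^sup>+z. ennreal (N1 z) \<partial>lborel)"
  have K1: "(\<integral>\<^sup>+z. ennreal (N1 z) \<partial>lborel) = ennreal K1" "0 \<le> K1"
    using I1 by (auto simp: K1_def less_top[symmetric] ennreal_enn2real)
  obtain K2 where K2: "0 \<le> K2" "\<And>h. 0 < h \<Longrightarrow> (\<integral>\<^sup>+z. ennreal (N2 h z) \<partial>lborel) \<le> ennreal (K2 * h powr ((2 - \<beta>) / 2))"
    using int_N2[OF b] unfolding N2_def by blast
  have K2': "(\<integral>\<^sup>+z. ennreal (N2 h z) \<partial>lborel) \<le> ennreal (K2 * h powr ((2 - \<beta>) / 2))" if h: "0 \<le> h" for h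
  proof (cases "h = 0")
    case True
    have "N2 h z = 0" for z using True RR_nonneg[of "fst z" "snd z"] by (simp add: N2_def)
    then show ?thesis using True by simp
  next
    case False then show ?thesis using h K2 by simp
  qed
  define C where "C = 8 * K1 + 6 * K2"
  show ?thesis
  proof (intro exI[of _ C] allI impI)
    fix s1 s2 t :: real and y1 y2 x :: "real ^ 'k"
    assume s: "0 \<le> s1" "s1 \<le> T" "0 \<le> s2" "s2 \<le> T" "0 \<le> t" "t \<le> T"
    define h where "h = \<bar>s1 - s2\<bar>"
    define \<eta> where "\<eta> = norm (y1 - y2)"
    have h0: "0 \<le> h" by (simp add: h_def)
    define F1 where "F1 = Fv \<beta> (s1, y1) (t, x)"
    define F2 where "F2 = Fv \<beta> (s2, y2) (t, x)"
    have i1: "integrable lborel F1" unfolding F1_def by (rule Fv_integrable[of _ T]) (use s T b in auto)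
    have i2: "integrable lborel F2" unfolding F2_def by (rule Fv_integrable[of _ T]) (use s T b in auto)
    have "vcov \<beta> (s1, y1) (t, x) - vcov \<beta> (s2, y2) (t, x) = Re (integral\<^sup>L lborel (\<lambda>z. F1 z - F2 z))"
      using i1 i2 by (simp add: vcov_Fv F1_def F2_def)
    then have "\<bar>vcov \<beta> (s1, y1) (t, x) - vcov \<beta> (s2, y2) (t, x)\<bar> \<le> cmod (integral\<^sup>L lborel (\<lambda>z. F1 z - F2 z))"
      using abs_Re_le_cmod by simp
    then have "ennreal \<bar>vcov \<beta> (s1, y1) (t, x) - vcov \<beta> (s2, y2) (t, x)\<bar> \<le> ennreal (cmod (integral\<^sup>L lborel (\<lambda>z. F1 z - F2 z)))"
      by (rule ennreal_leI)
    also have "\<dots> \<le> (\<integral>\<^sup>+z. norm (F1 z - F2 z) \<partial>lborel)"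
      by (rule integral_norm_bound_ennreal) (use i1 i2 in auto)
    also have "\<dots> \<le> (\<integral>\<^sup>+z. ennreal (8 * \<eta> powr \<delta> * N1 z + 6 * N2 h z) \<partial>lborel)"
      by (rule nn_integral_mono, rule ennreal_leI)
         (unfold F1_def F2_def N1_def N2_def \<eta>_def h_def, rule Fv_diff_norm, use s d in auto)
    also have "\<dots> = ennreal (8 * \<eta> powr \<delta>) * (\<integral>\<^sup>+z. ennreal (N1 z) \<partial>lborel) + ennreal 6 * (\<integral>\<^sup>+z. ennreal (N2 h z) \<partial>lborel)"
    proof -
      have "(\<integral>\<^sup>+z. ennreal (8 * \<eta> powr \<delta> * N1 z + 6 * N2 h z) \<partial>lborel)
          = (\<integral>\<^sup>+z. ennreal (8 * \<eta> powr \<delta> * N1 z) \<partial>lborel) + (\<integral>\<^sup>+z. ennreal (6 * N2 h z) \<partial>lborel)"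
        by (rule nn_add_real) (use N10 N20[OF h0] in auto)
      also have "(\<integral>\<^sup>+z. ennreal (8 * \<eta> powr \<delta> * N1 z) \<partial>lborel) = ennreal (8 * \<eta> powr \<delta>) * (\<integral>\<^sup>+z. ennreal (N1 z) \<partial>lborel)"
        by (rule nn_cmult_real) auto
      also have "(\<integral>\<^sup>+z. ennreal (6 * N2 h z) \<partial>lborel) = ennreal 6 * (\<integral>\<^sup>+z. ennreal (N2 h z) \<partial>lborel)"
        by (rule nn_cmult_real) auto
      finally show ?thesis .
    qed
    also have "\<dots> \<le> ennreal (8 * \<eta> powr \<delta>) * ennreal K1 + ennreal 6 * ennreal (K2 * h powr ((2 - \<beta>) / 2))"
      using K1 K2'[OF h0] by (intro add_mono mult_left_mono) auto
    also have "\<dots> = ennreal (8 * \<eta> powr \<delta> * K1 + 6 * (K2 * h powr ((2 - \<beta>) / 2)))"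
      using K1 K2 by (simp add: ennreal_num_mult[symmetric] ennreal_mult[symmetric] ennreal_plus[symmetric] del: ennreal_plus)
    finally have "\<bar>vcov \<beta> (s1, y1) (t, x) - vcov \<beta> (s2, y2) (t, x)\<bar> \<le> 8 * \<eta> powr \<delta> * K1 + 6 * (K2 * h powr ((2 - \<beta>) / 2))"
      using K1 K2 by (subst (asm) ennreal_le_iff) auto
    also have "\<dots> \<le> C * (h powr ((2 - \<beta>) / 2) + \<eta> powr \<delta>)"
    proof -
      have "0 \<le> \<eta> powr \<delta>" "0 \<le> h powr ((2 - \<beta>) / 2)" by auto
      then have "8 * \<eta> powr \<delta> * K1 \<le> 8 * K1 * \<eta> powr \<delta> + 6 * K2 * \<eta> powr \<delta>"
           "6 * (K2 * h powr ((2 - \<beta>) / 2)) \<le> 8 * K1 * h powr ((2 - \<beta>) / 2) + 6 * K2 * h powr ((2 - \<beta>) / 2)"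
        using K1 K2 by (auto simp: mult_nonneg_nonneg)
      then show ?thesis by (simp add: C_def algebra_simps)
    qed
    finally show "\<bar>vcov \<beta> (s1, y1) (t, x) - vcov \<beta> (s2, y2) (t, x)\<bar> \<le> C * (\<bar>s1 - s2\<bar> powr ((2 - \<beta>) / 2) + norm (y1 - y2) powr \<delta>)"
      by (simp add: h_def \<eta>_def)
  qed
qed

lemma prod_integrable:
  fixes a b :: "'a \<Rightarrow> real"
  assumes [measurable]: "a \<in> borel_measurable M" "b \<in> borel_measurable M"
    and ia: "integrable M (\<lambda>\<omega>. (a \<omega>)\<^sup>2)" and ib: "integrable M (\<lambda>\<omega>. (b \<omega>)\<^sup>2)"
  shows "integrable M (\<lambda>\<omega>. a \<omega> * b \<omega>)"
proof (rule Bochner_Integration.integrable_bound)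
  show "integrable M (\<lambda>\<omega>. (a \<omega>)\<^sup>2 + (b \<omega>)\<^sup>2)" using ia ib by (rule Bochner_Integration.integrable_add)
  show "(\<lambda>\<omega>. a \<omega> * b \<omega>) \<in> borel_measurable M" by measurable
  show "AE \<omega> in M. norm (a \<omega> * b \<omega>) \<le> norm ((a \<omega>)\<^sup>2 + (b \<omega>)\<^sup>2)"
  proof (rule AE_I2)
    fix \<omega>
    have sq: "0 \<le> (\<bar>a \<omega>\<bar> - \<bar>b \<omega>\<bar>)\<^sup>2" by simp
    have ex: "(\<bar>a \<omega>\<bar> - \<bar>b \<omega>\<bar>)\<^sup>2 = (a \<omega>)\<^sup>2 + (b \<omega>)\<^sup>2 - 2 * (\<bar>a \<omega>\<bar> * \<bar>b \<omega>\<bar>)"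
      by (simp add: power2_eq_square algebra_simps)
    have nn: "0 \<le> \<bar>a \<omega>\<bar> * \<bar>b \<omega>\<bar>" by simp
    have "\<bar>a \<omega>\<bar> * \<bar>b \<omega>\<bar> \<le> (a \<omega>)\<^sup>2 + (b \<omega>)\<^sup>2" using sq nn unfolding ex by linarith
    then show "norm (a \<omega> * b \<omega>) \<le> norm ((a \<omega>)\<^sup>2 + (b \<omega>)\<^sup>2)" by (simp add: abs_mult)
  qed
qed

lemma cov_diff:
  assumes X: "hat_v_process M d \<beta> X" and j: "j < d"
  shows "integral\<^sup>L M (\<lambda>\<omega>. (X j p1 \<omega> - X j p2 \<omega>) * X j q \<omega>) = vcov \<beta> p1 q - vcov \<beta> p2 q"
proof -
  have m: "\<And>p. X j p \<in> borel_measurable M" and sq: "\<And>p. integrable M (\<lambda>\<omega>. (X j p \<omega>)\<^sup>2)"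
    and cv: "\<And>p q. integral\<^sup>L M (\<lambda>\<omega>. X j p \<omega> * X j q \<omega>) = vcov \<beta> p q"
    using X j unfolding hat_v_process_def by auto
  have i1: "integrable M (\<lambda>\<omega>. X j p1 \<omega> * X j q \<omega>)" by (rule prod_integrable[OF m m sq sq])
  have i2: "integrable M (\<lambda>\<omega>. X j p2 \<omega> * X j q \<omega>)" by (rule prod_integrable[OF m m sq sq])
  have "integral\<^sup>L M (\<lambda>\<omega>. (X j p1 \<omega> - X j p2 \<omega>) * X j q \<omega>) = integral\<^sup>L M (\<lambda>\<omega>. X j p1 \<omega> * X j q \<omega> - X j p2 \<omega> * X j q \<omega>)"
    by (simp add: left_diff_distrib)
  also have "\<dots> = integral\<^sup>L M (\<lambda>\<omega>. X j p1 \<omega> * X j q \<omega>) - integral\<^sup>L M (\<lambda>\<omega>. X j p2 \<omega> * X j q \<omega>)"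
    by (rule Bochner_Integration.integral_diff[OF i1 i2])
  finally show ?thesis by (simp add: cv)
qed

lemma cbox_time:
  fixes p a b :: "'k::finite pt"
  assumes "p \<in> cbox a b"
  shows "fst p \<le> fst b"
proof -
  obtain a1 a2 where a: "a = (a1, a2)" by (cases a)
  obtain b1 b2 where b: "b = (b1, b2)" by (cases b)
  obtain p1 p2 where p: "p = (p1, p2)" by (cases p)
  have "(p1, p2) \<in> cbox a1 b1 \<times> cbox a2 b2" using assms unfolding a b p cbox_Pair_eq .
  then have "p1 \<in> cbox a1 b1" by (rule SigmaD1)
  then have "p1 \<le> b1" by simp
  then show ?thesis by (simp add: p b)
qed

theorem lemma5p5:
  fixes M :: "'a measure" and X :: "nat \<Rightarrow> 'k::finite pt \<Rightarrow> 'a \<Rightarrow> real"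
    and d :: nat and \<beta> \<epsilon>0 \<rho> \<delta> :: real and a b :: "'k pt" and t :: real and x :: "real ^ 'k"
  assumes d: "d \<ge> 1"
    and beta: "(0 < \<beta> \<and> \<beta> < min (real CARD('k)) 2) \<or> (CARD('k) = 1 \<and> \<beta> = 1)"
    and X: "hat_v_process M d \<beta> X"
    and F_pos: "cbox a b \<subseteq> {p. 0 < fst p}"
    and eps0: "0 < \<epsilon>0" "\<epsilon>0 < 1"
    and tx: "(t, x) \<in> cbox a b"
    and rho: "0 < \<rho>" "\<rho> \<le> \<epsilon>0"
    and B3: "Bbox \<beta> (3 * \<rho>) (t, x) \<subseteq> cbox a b"
    and delta: "(2 - \<beta>) / 2 < \<delta>" "\<delta> < min (2 - \<beta>) 1"
  shows "\<exists>C::real. \<forall>j<d.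
     (\<forall>s1 y1 s2 y2. (s1, y1) \<in> Bbox \<beta> (2 * \<rho>) (t, x) \<longrightarrow> (s2, y2) \<in> Bbox \<beta> (2 * \<rho>) (t, x) \<longrightarrow>
        \<bar>integral\<^sup>L M (\<lambda>\<omega>. (X j (s1, y1) \<omega> - X j (s2, y2) \<omega>) * X j (t, x) \<omega>)\<bar>
          \<le> C * (\<bar>s1 - s2\<bar> powr ((2 - \<beta>) / 2) + norm (y1 - y2) powr \<delta>)) \<and>
     (\<forall>tt xx. Bbox \<beta> (2 * \<rho>) (tt, xx) \<subseteq> cbox a b \<longrightarrow> Dist \<beta> (t, x) (tt, xx) \<ge> 6 * \<rho> \<longrightarrow>
       (\<forall>s1 y1 s2 y2. (s1, y1) \<in> Bbox \<beta> (2 * \<rho>) (tt, xx) \<longrightarrow> (s2, y2) \<in> Bbox \<beta> (2 * \<rho>) (tt, xx) \<longrightarrow>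
        \<bar>integral\<^sup>L M (\<lambda>\<omega>. (X j (s1, y1) \<omega> - X j (s2, y2) \<omega>) * X j (t, x) \<omega>)\<bar>
          \<le> C * (\<bar>s1 - s2\<bar> powr ((2 - \<beta>) / 2) + norm (y1 - y2) powr \<delta>)))"
proof -
  have b3: "0 < \<beta> \<and> \<beta> \<le> CARD('k) \<and> \<beta> < 2"
    using beta
  proof (elim disjE)
    assume "0 < \<beta> \<and> \<beta> < min (real CARD('k)) 2" then show ?thesis by simp
  next
    assume "CARD('k) = 1 \<and> \<beta> = 1" then show ?thesis by simp
  qed
  then have b: "0 < \<beta>" "\<beta> \<le> CARD('k)" "\<beta> < 2" by auto
  have dl: "0 < \<delta>" "\<delta> \<le> 1" "\<delta> < 2 - \<beta>"
  proof -
    have d2: "\<delta> < 2 - \<beta> \<and> \<delta> < 1" using delta(2) by (simp only: min_less_iff_conj)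
    have "0 < (2 - \<beta>) / 2" using b(3) by simp
    then show "0 < \<delta>" using delta(1) by linarith
    show "\<delta> \<le> 1" "\<delta> < 2 - \<beta>" using d2 by simp_all
  qed
  define T where "T = fst b"
  have inF: "0 < fst p \<and> fst p \<le> T" if "p \<in> cbox a b" for p
  proof -
    have "p \<in> {p. 0 < fst p}" using that F_pos by (rule subsetD[rotated])
    then have "0 < fst p" by simp
    moreover have "fst p \<le> fst b" using cbox_time[OF that] .
    ultimately show ?thesis by (simp add: T_def)
  qed
  have t: "0 < t" "t \<le> T" using inF[OF tx] by simp_all
  have T: "0 < T" using t by simp
  from vcov_holder[OF b dl T] obtain C where C0: "\<forall>s1 s2 t (y1::real ^ 'k) y2 x. 0 \<le> s1 \<longrightarrow> s1 \<le> T \<longrightarrow> 0 \<le> s2 \<longrightarrow> s2 \<le> T \<longrightarrow> 0 \<le> t \<longrightarrow> t \<le> T \<longrightarrow>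
     \<bar>vcov \<beta> (s1, y1) (t, x) - vcov \<beta> (s2, y2) (t, x)\<bar> \<le> C * (\<bar>s1 - s2\<bar> powr ((2 - \<beta>) / 2) + norm (y1 - y2) powr \<delta>)" ..
  note C = C0[rule_format]
  have key: "\<bar>integral\<^sup>L M (\<lambda>\<omega>. (X j (s1, y1) \<omega> - X j (s2, y2) \<omega>) * X j (t, x) \<omega>)\<bar>
          \<le> C * (\<bar>s1 - s2\<bar> powr ((2 - \<beta>) / 2) + norm (y1 - y2) powr \<delta>)"
    if j: "j < d" and p1: "(s1, y1) \<in> cbox a b" and p2: "(s2, y2) \<in> cbox a b" for j s1 y1 s2 y2
  proof -
    have "integral\<^sup>L M (\<lambda>\<omega>. (X j (s1, y1) \<omega> - X j (s2, y2) \<omega>) * X j (t, x) \<omega>) = vcov \<beta> (s1, y1) (t, x) - vcov \<beta> (s2, y2) (t, x)"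
      by (rule cov_diff[OF X j])
    also have "\<bar>\<dots>\<bar> \<le> C * (\<bar>s1 - s2\<bar> powr ((2 - \<beta>) / 2) + norm (y1 - y2) powr \<delta>)"
    proof (rule C)
      show "0 \<le> s1" "s1 \<le> T" using inF[OF p1] by simp_all
      show "0 \<le> s2" "s2 \<le> T" using inF[OF p2] by simp_all
      show "0 \<le> t" "t \<le> T" using t by simp_all
    qed
    finally show ?thesis .
  qed
  have B23: "Bbox \<beta> (2 * \<rho>) (t, x) \<subseteq> Bbox \<beta> (3 * \<rho>) (t, x)"
  proof -
    have e: "(2 * \<rho>) powr e \<le> (3 * \<rho>) powr e" if "0 \<le> e" for e
      using rho(1) that by (intro powr_mono2) simp_all
    have z1: "0 \<le> 4 / (2 - \<beta>)" using b(3) by simp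
    have z2: "0 \<le> 2 / (2 - \<beta>)" using b(3) by simp
    note e1 = e[OF z1] and e2 = e[OF z2]
    show ?thesis
    proof (rule subsetI)
      fix q assume "q \<in> Bbox \<beta> (2 * \<rho>) (t, x)"
      then have A1: "\<bar>fst q - t\<bar> \<le> (2 * \<rho>) powr (4 / (2 - \<beta>))"
        and A2: "\<And>i. \<bar>snd q $ i - x $ i\<bar> \<le> (2 * \<rho>) powr (2 / (2 - \<beta>))"
        unfolding Bbox_def by auto
      have "\<bar>fst q - t\<bar> \<le> (3 * \<rho>) powr (4 / (2 - \<beta>))" using order_trans[OF A1 e1] .
      moreover have "\<bar>snd q $ i - x $ i\<bar> \<le> (3 * \<rho>) powr (2 / (2 - \<beta>))" for i using order_trans[OF A2 e2] .
      ultimately show "q \<in> Bbox \<beta> (3 * \<rho>) (t, x)" unfolding Bbox_def by auto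
    qed
  qed
  show ?thesis
  proof (intro exI[of _ C] allI impI conjI)
    fix j s1 y1 s2 y2 assume "j < d" "(s1, y1) \<in> Bbox \<beta> (2 * \<rho>) (t, x)" "(s2, y2) \<in> Bbox \<beta> (2 * \<rho>) (t, x)"
    show "\<bar>integral\<^sup>L M (\<lambda>\<omega>. (X j (s1, y1) \<omega> - X j (s2, y2) \<omega>) * X j (t, x) \<omega>)\<bar>
          \<le> C * (\<bar>s1 - s2\<bar> powr ((2 - \<beta>) / 2) + norm (y1 - y2) powr \<delta>)"
    proof (rule key)
      show "j < d" by fact
      show "(s1, y1) \<in> cbox a b" "(s2, y2) \<in> cbox a b" using B23 B3 \<open>(s1, y1) \<in> Bbox \<beta> (2 * \<rho>) (t, x)\<close> \<open>(s2, y2) \<in> Bbox \<beta> (2 * \<rho>) (t, x)\<close> by blast+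
    qed
  next
    fix j tt xx s1 y1 s2 y2 assume "j < d" "Bbox \<beta> (2 * \<rho>) (tt, xx) \<subseteq> cbox a b"
      "(s1, y1) \<in> Bbox \<beta> (2 * \<rho>) (tt, xx)" "(s2, y2) \<in> Bbox \<beta> (2 * \<rho>) (tt, xx)"
    show "\<bar>integral\<^sup>L M (\<lambda>\<omega>. (X j (s1, y1) \<omega> - X j (s2, y2) \<omega>) * X j (t, x) \<omega>)\<bar>
          \<le> C * (\<bar>s1 - s2\<bar> powr ((2 - \<beta>) / 2) + norm (y1 - y2) powr \<delta>)"
    proof (rule key)
      show "j < d" by fact
      show "(s1, y1) \<in> cbox a b" "(s2, y2) \<in> cbox a b" using \<open>Bbox \<beta> (2 * \<rho>) (tt, xx) \<subseteq> cbox a b\<close> \<open>(s1, y1) \<in> Bbox \<beta> (2 * \<rho>) (tt, xx)\<close> \<open>(s2, y2) \<in> Bbox \<beta> (2 * \<rho>) (tt, xx)\<close> by blast+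
    qed
  qed
qed

end
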